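(* Assume $E_{l,m}$ is toric, i.e. $q-p$ divides $m$, and write $m=a(q-p)$. Then the set $\mathcal H^B$ of $B$-fixed points of $\mathcal H$ consists of the single point $[J_0]$, where $J_0=(X_0^{q-p},\; X_2,\; X_4,\; X_1^{aq}X_3^{ap}) \subset \mathbb C[X_0,X_1,X_2,X_3,X_4]$.
   Context: Let $l=p/q \in \mathbb Q \cap (0,1]$ with $\gcd(p,q)=1$ and $m \in \mathbb N$. Let $H_{q-p}=\{X_0^{q-p}=X_1X_4-X_2X_3\} \subset \mathbb C^5$, where $\mathbb C^5=V(0)\oplus V(1)\oplus V(1)$ with coordinates $X_0,\dots,X_4$ and $SL(2)$ acts by left multiplication on the matrix $\begin{pmatrix} X_1 & X_3\\ X_2 & X_4\end{pmatrix}$. Let $G_0=\{\mathrm{diag}(t,t^{-p},t^{-p},t^q,t^q): t\in\mathbb C^*\}$ and $G_m=\{\mathrm{diag}(1,\zeta^{-1},\zeta^{-1},\zeta,\zeta): \zeta^m=1\}$; these commute with the $SL(2)$-action. Let $E_{l,m}=H_{q-p}/\!\!/(G_0\times G_m)$ (Popov's 3-dimensional affine normal quasihomogeneous $SL(2)$-variety). Identify $\mathrm{Irr}(G_0\times G_m)$ with $\mathbb Z\times\mathbb Z/m\mathbb Z$ and let $h(n,d)=1$ for all $(n,d)$ (the Hilbert function of the general fibers of the quotient morphism). Let $\mathcal H=\mathrm{Hilb}^{G_0\times G_m}_h(H_{q-p})$ be the invariant Hilbert scheme, with the $SL(2)$-action induced from $H_{q-p}$, and let $B\subset SL(2)$ be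 the Borel subgroup of upper triangular matrices. *)

theory Defs
  imports Complex_Main
begin

text \<open>Points of C^5 are modelled as functions nat => complex, of which only the
coordinates 0..4 matter. The coordinate ring C[X_0,...,X_4] is modelled (faithfully,
since C is infinite) as the ring of polynomial functions in X_0,...,X_4.\<close>

type_synonym pt = "nat \<Rightarrow> complex"
type_synonym pfun = "pt \<Rightarrow> complex"

inductive_set polyfun :: "pfun set" where
  pf_const: "(\<lambda>x. c) \<in> polyfun"
| pf_coord: "i < 5 \<Longrightarrow> (\<lambda>x. x i) \<in> polyfun"
| pf_add: "f \<in> polyfun \<Longrightarrow> g \<in> polyfun \<Longrightarrow> (\<lambda>x. f x + g x) \<in> polyfun"
| pf_mult: "f \<in> polyfun \<Longrightarrow> g \<in> polyfun \<Longrightarrow> (\<lambda>x. f x * g x) \<in> polyfun"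

definition is_pf_ideal :: "pfun set \<Rightarrow> bool" where
  "is_pf_ideal I \<longleftrightarrow> I \<subseteq> polyfun \<and> (\<lambda>x. 0) \<in> I \<and>
     (\<forall>f\<in>I. \<forall>g\<in>I. (\<lambda>x. f x + g x) \<in> I) \<and>
     (\<forall>f\<in>I. \<forall>h\<in>polyfun. (\<lambda>x. h x * f x) \<in> I)"

definition pf_ideal_gen :: "pfun list \<Rightarrow> pfun set" where
  "pf_ideal_gen gs = {f. \<exists>hs. length hs = length gs \<and> set hs \<subseteq> polyfun \<and>
      f = (\<lambda>x. \<Sum>i<length gs. (hs ! i) x * (gs ! i) x)}"

definition H_eq :: "nat \<Rightarrow> nat \<Rightarrow> pfun" where
  "H_eq p q = (\<lambda>x. x 0 ^ (q - p) - (x 1 * x 4 - x 2 * x 3))"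

definition gact :: "nat \<Rightarrow> nat \<Rightarrow> complex \<Rightarrow> complex \<Rightarrow> pt \<Rightarrow> pt" where
  "gact p q t \<zeta> x = x(0 := t * x 0,
                      1 := inverse (t ^ p * \<zeta>) * x 1,
                      2 := inverse (t ^ p * \<zeta>) * x 2,
                      3 := t ^ q * \<zeta> * x 3,
                      4 := t ^ q * \<zeta> * x 4)"

definition Ggrp :: "nat \<Rightarrow> (complex \<times> complex) set" where
  "Ggrp m = {(t, \<zeta>). t \<noteq> 0 \<and> \<zeta> ^ m = 1}"

text \<open>Character (n,d) in Z x Z/mZ of G_0 x G_m.\<close>
definition chi :: "int \<Rightarrow> int \<Rightarrow> complex \<Rightarrow> complex \<Rightarrow> complex" where
  "chi n d t \<zeta> = t powi n * \<zeta> powi d"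

text \<open>Action of the Borel element [[alpha, beta],[0, 1/alpha]] by left
multiplication on the matrix [[X1, X3],[X2, X4]].\<close>
definition bact :: "complex \<Rightarrow> complex \<Rightarrow> pt \<Rightarrow> pt" where
  "bact \<alpha> \<beta> x = x(1 := \<alpha> * x 1 + \<beta> * x 2,
                    2 := inverse \<alpha> * x 2,
                    3 := \<alpha> * x 3 + \<beta> * x 4,
                    4 := inverse \<alpha> * x 4)"

text \<open>Isotypic component of type (n,d) of the G-module C[X]/I, as a set of
representatives in C[X].\<close>
definition weight_space_mod :: "nat \<Rightarrow> nat \<Rightarrow> nat \<Rightarrow> pfun set \<Rightarrow> int \<Rightarrow> int \<Rightarrow> pfun set" where
  "weight_space_mod p q m I n d = {f \<in> polyfun. \<forall>(t, \<zeta>) \<in> Ggrp m.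
       (\<lambda>x. f (gact p q t \<zeta> x) - chi n d t \<zeta> * f x) \<in> I}"

definition dim_one_mod :: "pfun set \<Rightarrow> pfun set \<Rightarrow> bool" where
  "dim_one_mod W I \<longleftrightarrow> (\<exists>f\<in>W. f \<notin> I \<and> (\<forall>g\<in>W. \<exists>c. (\<lambda>x. g x - c * f x) \<in> I))"

text \<open>Closed points of the invariant Hilbert scheme Hilb^{G_0 x G_m}_h(H_{q-p}) with
h = 1: G-stable ideals of C[H_{q-p}] (= ideals of C[X] containing the equation of
H_{q-p}) whose quotient has every isotypic component of dimension h(n,d) = 1.\<close>
definition inv_hilb_points :: "nat \<Rightarrow> nat \<Rightarrow> nat \<Rightarrow> pfun set set" where
  "inv_hilb_points p q m = {I. is_pf_ideal I \<and> H_eq p q \<in> I \<and>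
      (\<forall>(t, \<zeta>) \<in> Ggrp m. \<forall>f \<in> I. (\<lambda>x. f (gact p q t \<zeta> x)) \<in> I) \<and>
      (\<forall>n d. dim_one_mod (weight_space_mod p q m I n d) I)}"

text \<open>B-fixed points: B-stable ideals.\<close>
definition B_stable :: "pfun set \<Rightarrow> bool" where
  "B_stable I \<longleftrightarrow> (\<forall>\<alpha> \<beta>. \<alpha> \<noteq> 0 \<longrightarrow> (\<forall>f\<in>I. (\<lambda>x. f (bact \<alpha> \<beta> x)) \<in> I))"

definition J0 :: "nat \<Rightarrow> nat \<Rightarrow> nat \<Rightarrow> pfun set" where
  "J0 p q a = pf_ideal_gen [(\<lambda>x. x 0 ^ (q - p)), (\<lambda>x. x 2), (\<lambda>x. x 4),
                            (\<lambda>x. x 1 ^ (a * q) * x 3 ^ (a * p))]"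

end

theory Submission
  imports Defs "HOL-Computational_Algebra.Polynomial"
begin

lemma pf_neg: "f \<in> polyfun \<Longrightarrow> (\<lambda>x. - f x) \<in> polyfun"
  using pf_mult[OF pf_const[of "-1"]] by simp
lemma pf_smult: "f \<in> polyfun \<Longrightarrow> (\<lambda>x. c * f x) \<in> polyfun"
  using pf_mult[OF pf_const[of c]] by simp
lemma pf_diff: "f \<in> polyfun \<Longrightarrow> g \<in> polyfun \<Longrightarrow> (\<lambda>x. f x - g x) \<in> polyfun"
  using pf_add[OF _ pf_neg[of g]] by simp
lemma pf_sum: "finite A \<Longrightarrow> (\<And>a. a \<in> A \<Longrightarrow> f a \<in> polyfun) \<Longrightarrow> (\<lambda>x. \<Sum>a\<in>A. f a x) \<in> polyfun"
  by (induction A rule: finite_induct) (auto intro: pf_const pf_add)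
lemma pf_prod: "finite A \<Longrightarrow> (\<And>a. a \<in> A \<Longrightarrow> f a \<in> polyfun) \<Longrightarrow> (\<lambda>x. \<Prod>a\<in>A. f a x) \<in> polyfun"
  by (induction A rule: finite_induct) (auto intro: pf_const pf_mult)
lemma pf_pow: "f \<in> polyfun \<Longrightarrow> (\<lambda>x. f x ^ n) \<in> polyfun"
  by (induction n) (auto intro: pf_const pf_mult)
lemma pf_comp: "f \<in> polyfun \<Longrightarrow> (\<And>i. i < 5 \<Longrightarrow> (\<lambda>x. \<phi> x i) \<in> polyfun) \<Longrightarrow> (\<lambda>x. f (\<phi> x)) \<in> polyfun"
  by (induction f rule: polyfun.induct) (auto intro: pf_const pf_add pf_mult)

lemma pf_x: "i < 5 \<Longrightarrow> (\<lambda>x. c * x i) \<in> polyfun"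
  by (intro pf_smult pf_coord)

lemma gact_pf: "i < 5 \<Longrightarrow> (\<lambda>x. gact p q t \<zeta> x i) \<in> polyfun"
proof -
  assume "i < 5"
  then have "i = 0 \<or> i = 1 \<or> i = 2 \<or> i = 3 \<or> i = 4" by auto
  then show ?thesis by (auto simp: gact_def intro!: pf_x)
qed

lemma bact_pf: "i < 5 \<Longrightarrow> (\<lambda>x. bact \<alpha> \<beta> x i) \<in> polyfun"
proof -
  assume "i < 5"
  then have "i = 0 \<or> i = 1 \<or> i = 2 \<or> i = 3 \<or> i = 4" by auto
  then show ?thesis by (auto simp: bact_def intro!: pf_x pf_add pf_coord)
qed

definition M :: "nat \<Rightarrow> nat \<Rightarrow> nat \<Rightarrow> pfun" where
  "M p q a = (\<lambda>x. x 1 ^ (a * q) * x 3 ^ (a * p))"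

definition gl :: "nat \<Rightarrow> nat \<Rightarrow> nat \<Rightarrow> pfun list" where
  "gl p q a = [(\<lambda>x. x 0 ^ (q - p)), (\<lambda>x. x 2), (\<lambda>x. x 4),
                            (\<lambda>x. x 1 ^ (a * q) * x 3 ^ (a * p))]"

lemma J0_mem: "f \<in> J0 p q a \<longleftrightarrow> (\<exists>h0 h1 h2 h3. h0 \<in> polyfun \<and> h1 \<in> polyfun \<and> h2 \<in> polyfun \<and> h3 \<in> polyfun \<and>
   f = (\<lambda>x. h0 x * x 0 ^ (q - p) + h1 x * x 2 + h2 x * x 4 + h3 x * M p q a x))"
proof
  assume "f \<in> J0 p q a"
  then obtain hs where hs: "length hs = length (gl p q a)" "set hs \<subseteq> polyfun"
    "f = (\<lambda>x. \<Sum>i<length (gl p q a). (hs ! i) x * (gl p q a ! i) x)"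
    unfolding J0_def pf_ideal_gen_def gl_def[symmetric] mem_Collect_eq by blast
  have l4: "length hs = 4" using hs(1) by (simp add: gl_def)
  have "\<forall>i<4. hs ! i \<in> polyfun" using hs(2) l4 by auto
  moreover have "f = (\<lambda>x. (hs!0) x * x 0 ^ (q - p) + (hs!1) x * x 2 + (hs!2) x * x 4 + (hs!3) x * M p q a x)"
    unfolding hs(3) by (simp add: gl_def M_def eval_nat_numeral algebra_simps)
  ultimately show "\<exists>h0 h1 h2 h3. h0 \<in> polyfun \<and> h1 \<in> polyfun \<and> h2 \<in> polyfun \<and> h3 \<in> polyfun \<and>
   f = (\<lambda>x. h0 x * x 0 ^ (q - p) + h1 x * x 2 + h2 x * x 4 + h3 x * M p q a x)"
    by (intro exI[of _ "hs!0"] exI[of _ "hs!1"] exI[of _ "hs!2"] exI[of _ "hs!3"]) simp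
next
  assume "\<exists>h0 h1 h2 h3. h0 \<in> polyfun \<and> h1 \<in> polyfun \<and> h2 \<in> polyfun \<and> h3 \<in> polyfun \<and>
   f = (\<lambda>x. h0 x * x 0 ^ (q - p) + h1 x * x 2 + h2 x * x 4 + h3 x * M p q a x)"
  then obtain h0 h1 h2 h3 where h: "h0 \<in> polyfun" "h1 \<in> polyfun" "h2 \<in> polyfun" "h3 \<in> polyfun"
   "f = (\<lambda>x. h0 x * x 0 ^ (q - p) + h1 x * x 2 + h2 x * x 4 + h3 x * M p q a x)" by blast
  show "f \<in> J0 p q a" unfolding J0_def pf_ideal_gen_def
    by (rule CollectI, rule exI[of _ "[h0,h1,h2,h3]"]) (simp add: h M_def eval_nat_numeral algebra_simps)
qed


lemma univ_unique:
  fixes A :: "nat \<Rightarrow> complex"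
  assumes "finite K" "\<And>z. (\<Sum>e\<in>K. A e * z ^ e) = 0" "e \<in> K"
  shows "A e = 0"
proof -
  define P where "P = (\<Sum>e\<in>K. monom (A e) e)"
  have "\<And>z. poly P z = 0" using assms(2) by (simp add: P_def poly_sum poly_monom)
  then have "P = 0" using poly_all_0_iff_0 by blast
  then have "coeff P e = 0" by simp
  moreover have "coeff P e = A e" using assms(1,3)
    by (simp add: P_def coeff_sum coeff_monom)
  ultimately show ?thesis by simp
qed

definition monoK :: "nat \<Rightarrow> (nat \<Rightarrow> nat) \<Rightarrow> pt \<Rightarrow> complex" where
  "monoK k \<alpha> x = (\<Prod>i<k. x i ^ \<alpha> i)"

lemma monoK_upd: "j \<ge> k \<Longrightarrow> monoK k \<alpha> (x(j := z)) = monoK k \<alpha> x"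
  unfolding monoK_def by (intro prod.cong) auto

lemma monoK_upd2: "j \<ge> k \<Longrightarrow> monoK k (\<alpha>(j := e)) x = monoK k \<alpha> x"
  unfolding monoK_def by (intro prod.cong) auto

lemma uniqK:
  "\<forall>S c. finite S \<and> (\<forall>\<alpha>\<in>S. \<forall>i\<ge>k. \<alpha> i = 0) \<and> (\<forall>x. (\<Sum>\<alpha>\<in>S. c \<alpha> * monoK k \<alpha> x) = 0)
      \<longrightarrow> (\<forall>\<alpha>\<in>S. c \<alpha> = 0)"
proof (induction k)
  case 0
  show ?case
  proof (intro allI impI ballI)
    fix S c \<alpha>
    assume H: "finite S \<and> (\<forall>\<alpha>\<in>S. \<forall>i\<ge>0. \<alpha> i = 0) \<and> (\<forall>x. (\<Sum>\<alpha>\<in>S. c \<alpha> * monoK 0 \<alpha> x) = 0)"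
      and a: "\<alpha> \<in> S"
    have z: "\<And>\<beta>. \<beta> \<in> S \<Longrightarrow> \<beta> = (\<lambda>_. 0)" using H by auto
    have "S = {\<alpha>}"
    proof (rule set_eqI)
      fix y show "y \<in> S \<longleftrightarrow> y \<in> {\<alpha>}" using z[of y] z[OF a] a by auto
    qed
    then show "c \<alpha> = 0" using H a by (simp add: monoK_def)
  qed
next
  case (Suc k)
  show ?case
  proof (intro allI impI ballI)
    fix S c \<alpha>
    assume H: "finite S \<and> (\<forall>\<alpha>\<in>S. \<forall>i\<ge>Suc k. \<alpha> i = 0) \<and> (\<forall>x. (\<Sum>\<alpha>\<in>S. c \<alpha> * monoK (Suc k) \<alpha> x) = 0)"
      and a: "\<alpha> \<in> S"
    define e where "e = \<alpha> k"
    define K where "K = (\<lambda>\<alpha>. \<alpha> k) ` S"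
    define Se where "Se = (\<lambda>e. {\<beta>\<in>S. \<beta> k = e})"
    have fS: "finite S" using H by blast
    have decomp: "(\<Sum>\<beta>\<in>S. c \<beta> * monoK (Suc k) \<beta> x) = (\<Sum>e\<in>K. (\<Sum>\<beta>\<in>Se e. c \<beta> * monoK k \<beta> x) * x k ^ e)" for x
    proof -
      have "(\<Sum>\<beta>\<in>S. c \<beta> * monoK (Suc k) \<beta> x) = (\<Sum>\<beta>\<in>S. c \<beta> * monoK k \<beta> x * x k ^ \<beta> k)"
        by (simp add: monoK_def mult.assoc)
      also have "\<dots> = (\<Sum>e\<in>K. \<Sum>\<beta>\<in>{\<beta>\<in>S. \<beta> k = e}. c \<beta> * monoK k \<beta> x * x k ^ \<beta> k)"
        unfolding K_def by (rule sum.image_gen[OF fS])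
      also have "\<dots> = (\<Sum>e\<in>K. (\<Sum>\<beta>\<in>Se e. c \<beta> * monoK k \<beta> x) * x k ^ e)"
        unfolding Se_def sum_distrib_right by (intro sum.cong) auto
      finally show ?thesis .
    qed
    have inner: "(\<Sum>\<beta>\<in>Se e. c \<beta> * monoK k \<beta> x) = 0" for x
    proof -
      have Z: "\<And>z. (\<Sum>e\<in>K. (\<Sum>\<beta>\<in>Se e. c \<beta> * monoK k \<beta> x) * z ^ e) = 0"
      proof -
        fix z
        have "(\<Sum>e\<in>K. (\<Sum>\<beta>\<in>Se e. c \<beta> * monoK k \<beta> (x(k:=z))) * (x(k:=z)) k ^ e) = 0"
          using H decomp[of "x(k:=z)"] by simp
        then show "(\<Sum>e\<in>K. (\<Sum>\<beta>\<in>Se e. c \<beta> * monoK k \<beta> x) * z ^ e) = 0"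
          by (simp add: monoK_upd)
      qed
      have "e \<in> K" using a by (simp add: K_def e_def)
      then show ?thesis using univ_unique[of K "\<lambda>e. (\<Sum>\<beta>\<in>Se e. c \<beta> * monoK k \<beta> x)", OF _ Z] fS K_def by blast
    qed
    define r where "r = (\<lambda>\<beta>::nat\<Rightarrow>nat. \<beta>(k := 0))"
    have inj: "inj_on r (Se e)"
    proof (rule inj_onI)
      fix \<beta> \<gamma> assume "\<beta> \<in> Se e" "\<gamma> \<in> Se e" "r \<beta> = r \<gamma>"
      then show "\<beta> = \<gamma>" unfolding r_def Se_def by (metis (mono_tags, lifting) fun_upd_triv fun_upd_upd mem_Collect_eq)
    qed
    define c' where "c' = (\<lambda>\<beta>::nat\<Rightarrow>nat. c (\<beta>(k := e)))"
    have bk: "\<beta> \<in> Se e \<Longrightarrow> (r \<beta>)(k := e) = \<beta>" for \<beta> unfolding r_def Se_def by auto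
    have "\<forall>x. (\<Sum>\<gamma>\<in>r ` Se e. c' \<gamma> * monoK k \<gamma> x) = 0"
    proof
      fix x
      have "(\<Sum>\<gamma>\<in>r ` Se e. c' \<gamma> * monoK k \<gamma> x) = (\<Sum>\<beta>\<in>Se e. c' (r \<beta>) * monoK k (r \<beta>) x)"
        by (rule sum.reindex[OF inj, unfolded comp_def])
      also have "\<dots> = (\<Sum>\<beta>\<in>Se e. c \<beta> * monoK k \<beta> x)"
        by (intro sum.cong) (auto simp: c'_def r_def monoK_upd2 Se_def fun_upd_idem)
      finally show "(\<Sum>\<gamma>\<in>r ` Se e. c' \<gamma> * monoK k \<gamma> x) = 0" using inner by simp
    qed
    moreover have "finite (r ` Se e)" using fS by (simp add: Se_def)
    moreover have "\<forall>\<gamma>\<in>r ` Se e. \<forall>i\<ge>k. \<gamma> i = 0" using H by (auto simp: r_def Se_def)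
    ultimately have "\<forall>\<gamma>\<in>r ` Se e. c' \<gamma> = 0" using Suc.IH by blast
    moreover have "\<alpha> \<in> Se e" using a by (simp add: Se_def e_def)
    ultimately have "c' (r \<alpha>) = 0" by blast
    then show "c \<alpha> = 0" using bk[OF \<open>\<alpha> \<in> Se e\<close>] by (simp add: c'_def)
  qed
qed


abbreviation mono :: "(nat \<Rightarrow> nat) \<Rightarrow> pt \<Rightarrow> complex" where "mono \<equiv> monoK 5"

definition EE :: "(nat \<Rightarrow> nat) set" where "EE = {\<alpha>. \<forall>i\<ge>5. \<alpha> i = 0}"

definition addv :: "(nat \<Rightarrow> nat) \<Rightarrow> (nat \<Rightarrow> nat) \<Rightarrow> (nat \<Rightarrow> nat)" where
  "addv \<alpha> \<beta> = (\<lambda>i. \<alpha> i + \<beta> i)"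

lemma monoK_addv: "monoK k (addv \<alpha> \<beta>) x = monoK k \<alpha> x * monoK k \<beta> x"
  unfolding monoK_def addv_def by (simp add: power_add prod.distrib)

lemma addv_EE: "\<alpha> \<in> EE \<Longrightarrow> \<beta> \<in> EE \<Longrightarrow> addv \<alpha> \<beta> \<in> EE"
  unfolding EE_def addv_def by auto

definition hasrep :: "(nat \<Rightarrow> nat) set \<Rightarrow> pfun \<Rightarrow> bool" where
  "hasrep P f \<longleftrightarrow> (\<exists>S c. finite S \<and> S \<subseteq> P \<and> f = (\<lambda>x. \<Sum>\<alpha>\<in>S. c \<alpha> * mono \<alpha> x))"

lemma sum_if_sub: "finite T \<Longrightarrow> S \<subseteq> T \<Longrightarrow> (\<Sum>\<alpha>\<in>T. (if \<alpha> \<in> S then g \<alpha> else 0)) = (\<Sum>\<alpha>\<in>S. g \<alpha>)"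
  by (simp add: sum.If_cases Int_absorb1 Int_absorb2)

lemma hasrep_add: "hasrep P f \<Longrightarrow> hasrep Q g \<Longrightarrow> hasrep (P \<union> Q) (\<lambda>x. f x + g x)"
proof -
  assume "hasrep P f" "hasrep Q g"
  then obtain S1 c1 S2 c2 where h: "finite S1" "S1 \<subseteq> P" "f = (\<lambda>x. \<Sum>\<alpha>\<in>S1. c1 \<alpha> * mono \<alpha> x)"
    "finite S2" "S2 \<subseteq> Q" "g = (\<lambda>x. \<Sum>\<alpha>\<in>S2. c2 \<alpha> * mono \<alpha> x)" unfolding hasrep_def by blast
  define c where "c = (\<lambda>\<alpha>. (if \<alpha> \<in> S1 then c1 \<alpha> else 0) + (if \<alpha> \<in> S2 then c2 \<alpha> else 0))"
  have "(\<lambda>x. f x + g x) = (\<lambda>x. \<Sum>\<alpha>\<in>S1 \<union> S2. c \<alpha> * mono \<alpha> x)"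
  proof
    fix x
    have "(\<Sum>\<alpha>\<in>S1 \<union> S2. c \<alpha> * mono \<alpha> x) = (\<Sum>\<alpha>\<in>S1 \<union> S2. (if \<alpha> \<in> S1 then c1 \<alpha> * mono \<alpha> x else 0))
       + (\<Sum>\<alpha>\<in>S1 \<union> S2. (if \<alpha> \<in> S2 then c2 \<alpha> * mono \<alpha> x else 0))"
      unfolding sum.distrib[symmetric] c_def by (intro sum.cong) (auto simp: distrib_right)
    also have "\<dots> = f x + g x" using h by (simp add: sum_if_sub)
    finally show "f x + g x = (\<Sum>\<alpha>\<in>S1 \<union> S2. c \<alpha> * mono \<alpha> x)" by simp
  qed
  then show ?thesis unfolding hasrep_def using h by blast
qed

lemma hasrep_mult: "hasrep EE f \<Longrightarrow> hasrep EE g \<Longrightarrow> hasrep EE (\<lambda>x. f x * g x)"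
proof -
  assume "hasrep EE f" "hasrep EE g"
  then obtain S1 c1 S2 c2 where h: "finite S1" "S1 \<subseteq> EE" "f = (\<lambda>x. \<Sum>\<alpha>\<in>S1. c1 \<alpha> * mono \<alpha> x)"
    "finite S2" "S2 \<subseteq> EE" "g = (\<lambda>x. \<Sum>\<alpha>\<in>S2. c2 \<alpha> * mono \<alpha> x)" unfolding hasrep_def by blast
  define U where "U = (\<lambda>(\<alpha>, \<beta>). addv \<alpha> \<beta>) ` (S1 \<times> S2)"
  define c where "c = (\<lambda>\<gamma>. \<Sum>(\<alpha>, \<beta>)\<in>{z\<in>S1 \<times> S2. (\<lambda>(\<alpha>, \<beta>). addv \<alpha> \<beta>) z = \<gamma>}. c1 \<alpha> * c2 \<beta>)"
  have fin: "finite (S1 \<times> S2)" using h by simp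
  have "(\<lambda>x. f x * g x) = (\<lambda>x. \<Sum>\<gamma>\<in>U. c \<gamma> * mono \<gamma> x)"
  proof
    fix x
    have "f x * g x = (\<Sum>(\<alpha>, \<beta>)\<in>S1 \<times> S2. c1 \<alpha> * c2 \<beta> * mono (addv \<alpha> \<beta>) x)"
      unfolding h(3,6) sum_product sum.cartesian_product monoK_addv by (simp add: algebra_simps)
    also have "\<dots> = (\<Sum>\<gamma>\<in>U. \<Sum>z\<in>{z\<in>S1 \<times> S2. (\<lambda>(\<alpha>, \<beta>). addv \<alpha> \<beta>) z = \<gamma>}. (\<lambda>(\<alpha>, \<beta>). c1 \<alpha> * c2 \<beta> * mono (addv \<alpha> \<beta>) x) z)"
      unfolding U_def by (rule sum.image_gen[OF fin])
    also have "\<dots> = (\<Sum>\<gamma>\<in>U. c \<gamma> * mono \<gamma> x)"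
      unfolding c_def sum_distrib_right by (intro sum.cong refl) auto
    finally show "f x * g x = (\<Sum>\<gamma>\<in>U. c \<gamma> * mono \<gamma> x)" .
  qed
  moreover have "U \<subseteq> EE" using h by (auto simp: U_def intro!: addv_EE)
  moreover have "finite U" using fin by (simp add: U_def)
  ultimately show ?thesis unfolding hasrep_def by blast
qed

definition dl :: "nat \<Rightarrow> nat \<Rightarrow> nat" where "dl i = (\<lambda>j. if j = i then 1 else 0)"

lemma mono_dl: "i < 5 \<Longrightarrow> mono (dl i) x = x i"
proof -
  assume "i < 5"
  have "mono (dl i) x = (\<Prod>j<5. (if j = i then x j else 1))"
    unfolding monoK_def dl_def by (intro prod.cong) auto
  also have "\<dots> = x i" using \<open>i < 5\<close> by (simp add: prod.delta)
  finally show ?thesis .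
qed

lemma hasrep_polyfun: "f \<in> polyfun \<Longrightarrow> hasrep EE f"
proof (induction f rule: polyfun.induct)
  case (pf_const c)
  have "(\<lambda>x. c) = (\<lambda>x. \<Sum>\<alpha>\<in>{\<lambda>_. 0}. c * mono \<alpha> x)" by (simp add: monoK_def)
  then show ?case unfolding hasrep_def EE_def by (intro exI[of _ "{\<lambda>_. 0}"] exI[of _ "\<lambda>_. c"]) auto
next
  case (pf_coord i)
  have "(\<lambda>x. x i) = (\<lambda>x. \<Sum>\<alpha>\<in>{dl i}. 1 * mono \<alpha> x)" using pf_coord by (simp add: mono_dl)
  moreover have "dl i \<in> EE" using pf_coord by (simp add: EE_def dl_def)
  ultimately show ?case unfolding hasrep_def by (intro exI[of _ "{dl i}"] exI[of _ "\<lambda>_. 1"]) auto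
next
  case (pf_add f g)
  then show ?case using hasrep_add[of EE f EE g] by simp
next
  case (pf_mult f g)
  then show ?case using hasrep_mult by blast
qed

lemma hasrep_shift: "hasrep EE f \<Longrightarrow> \<beta> \<in> EE \<Longrightarrow> hasrep {\<gamma>\<in>EE. \<beta> \<le> \<gamma>} (\<lambda>x. f x * mono \<beta> x)"
proof -
  assume "hasrep EE f" "\<beta> \<in> EE"
  then obtain S c where h: "finite S" "S \<subseteq> EE" "f = (\<lambda>x. \<Sum>\<alpha>\<in>S. c \<alpha> * mono \<alpha> x)" unfolding hasrep_def by blast
  define sh where "sh = (\<lambda>\<alpha>. addv \<alpha> \<beta>)"
  have inj: "inj_on sh S" unfolding sh_def addv_def
    by (rule inj_onI) (metis add_right_cancel ext)
  define c' where "c' = (\<lambda>\<gamma>. c (the_inv_into S sh \<gamma>))"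
  have "(\<lambda>x. f x * mono \<beta> x) = (\<lambda>x. \<Sum>\<gamma>\<in>sh ` S. c' \<gamma> * mono \<gamma> x)"
  proof
    fix x
    have "(\<Sum>\<gamma>\<in>sh ` S. c' \<gamma> * mono \<gamma> x) = (\<Sum>\<alpha>\<in>S. c' (sh \<alpha>) * mono (sh \<alpha>) x)"
      by (rule sum.reindex[OF inj, unfolded comp_def])
    also have "\<dots> = (\<Sum>\<alpha>\<in>S. c \<alpha> * mono \<alpha> x * mono \<beta> x)"
      by (intro sum.cong refl) (simp add: c'_def the_inv_into_f_f[OF inj], simp add: sh_def monoK_addv)
    finally show "f x * mono \<beta> x = (\<Sum>\<gamma>\<in>sh ` S. c' \<gamma> * mono \<gamma> x)"
      by (simp add: h(3) sum_distrib_right)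
  qed
  moreover have "sh ` S \<subseteq> {\<gamma>\<in>EE. \<beta> \<le> \<gamma>}" using h \<open>\<beta> \<in> EE\<close>
    by (auto simp: sh_def le_fun_def addv_def EE_def)
  ultimately show ?thesis unfolding hasrep_def using h by blast
qed

lemma uniq5: "finite S \<Longrightarrow> S \<subseteq> EE \<Longrightarrow> (\<And>x. (\<Sum>\<alpha>\<in>S. c \<alpha> * mono \<alpha> x) = 0) \<Longrightarrow> \<alpha> \<in> S \<Longrightarrow> c \<alpha> = 0"
  using uniqK[of 5] unfolding EE_def by blast

lemma hasrep_not_mono: "hasrep P f \<Longrightarrow> P \<subseteq> EE \<Longrightarrow> \<gamma> \<in> EE \<Longrightarrow> \<gamma> \<notin> P \<Longrightarrow> f \<noteq> mono \<gamma>"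
proof
  assume "hasrep P f" "P \<subseteq> EE" "\<gamma> \<in> EE" "\<gamma> \<notin> P" "f = mono \<gamma>"
  then obtain S c where h: "finite S" "S \<subseteq> P" "f = (\<lambda>x. \<Sum>\<alpha>\<in>S. c \<alpha> * mono \<alpha> x)" unfolding hasrep_def by blast
  define c' where "c' = c(\<gamma> := -1)"
  have gS: "\<gamma> \<notin> S" using h \<open>\<gamma> \<notin> P\<close> by blast
  have "(\<Sum>\<alpha>\<in>insert \<gamma> S. c' \<alpha> * mono \<alpha> x) = 0" for x
  proof -
    have "(\<Sum>\<alpha>\<in>S. c' \<alpha> * mono \<alpha> x) = (\<Sum>\<alpha>\<in>S. c \<alpha> * mono \<alpha> x)"
      using gS by (intro sum.cong) (auto simp: c'_def)
    also have "\<dots> = mono \<gamma> x" using h(3) \<open>f = mono \<gamma>\<close> by metis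
    finally show ?thesis using gS h(1) by (simp add: c'_def)
  qed
  then have "c' \<gamma> = 0" using h \<open>P \<subseteq> EE\<close> \<open>\<gamma> \<in> EE\<close> by (intro uniq5[of "insert \<gamma> S" c']) auto
  then show False by (simp add: c'_def)
qed


section \<open>Ideals\<close>

lemma id_sub: "is_pf_ideal I \<Longrightarrow> f \<in> I \<Longrightarrow> f \<in> polyfun"
  unfolding is_pf_ideal_def by blast
lemma id_zero: "is_pf_ideal I \<Longrightarrow> (\<lambda>x. 0) \<in> I"
  unfolding is_pf_ideal_def by blast
lemma id_add: "is_pf_ideal I \<Longrightarrow> f \<in> I \<Longrightarrow> g \<in> I \<Longrightarrow> (\<lambda>x. f x + g x) \<in> I"
  unfolding is_pf_ideal_def by blast
lemma id_mult: "is_pf_ideal I \<Longrightarrow> h \<in> polyfun \<Longrightarrow> f \<in> I \<Longrightarrow> (\<lambda>x. h x * f x) \<in> I"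
  unfolding is_pf_ideal_def by blast
lemma id_multr: "is_pf_ideal I \<Longrightarrow> h \<in> polyfun \<Longrightarrow> f \<in> I \<Longrightarrow> (\<lambda>x. f x * h x) \<in> I"
  using id_mult[of I h f] by (simp add: mult.commute)
lemma id_smult: "is_pf_ideal I \<Longrightarrow> f \<in> I \<Longrightarrow> (\<lambda>x. c * f x) \<in> I"
  using id_mult[OF _ pf_const] by blast
lemma id_neg: "is_pf_ideal I \<Longrightarrow> f \<in> I \<Longrightarrow> (\<lambda>x. - f x) \<in> I"
  using id_smult[of I f "-1"] by simp
lemma id_diff: "is_pf_ideal I \<Longrightarrow> f \<in> I \<Longrightarrow> g \<in> I \<Longrightarrow> (\<lambda>x. f x - g x) \<in> I"
  using id_add[OF _ _ id_neg, of I f g] by simp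
lemma id_sum: assumes "is_pf_ideal I" "finite A" "\<And>a. a \<in> A \<Longrightarrow> f a \<in> I" shows "(\<lambda>x. \<Sum>a\<in>A. f a x) \<in> I"
  using assms(2,3)
proof (induction A rule: finite_induct)
  case empty
  then show ?case using id_zero[OF assms(1)] by simp
next
  case (insert b A)
  then show ?case using id_add[OF assms(1), of "f b" "\<lambda>x. \<Sum>a\<in>A. f a x"] by simp
qed
lemma id_cong: "f \<in> I \<Longrightarrow> (\<And>x. f x = g x) \<Longrightarrow> g \<in> I"
proof -
  assume A: "f \<in> I" and B: "\<And>x. f x = g x"
  have "f = g" by (rule ext) (rule B)
  then show ?thesis using \<open>f \<in> I\<close> by simp
qed
lemma id_one: "is_pf_ideal I \<Longrightarrow> (\<lambda>x. 1) \<in> I \<Longrightarrow> f \<in> polyfun \<Longrightarrow> f \<in> I"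
  using id_mult[of I f "\<lambda>x. 1"] by simp

lemma M_pf: "M p q a \<in> polyfun"
  unfolding M_def by (intro pf_mult pf_pow pf_coord) auto

lemma J0_ideal: "is_pf_ideal (J0 p q a)"
  unfolding is_pf_ideal_def
proof (intro conjI ballI subsetI)
  fix f assume "f \<in> J0 p q a"
  then show "f \<in> polyfun" unfolding J0_mem
    by (auto intro!: pf_add pf_mult pf_pow pf_coord M_pf)
next
  show "(\<lambda>x. 0) \<in> J0 p q a" unfolding J0_mem
    by (intro exI[of _ "\<lambda>x. 0"]) (auto intro: pf_const)
next
  fix f g assume "f \<in> J0 p q a" "g \<in> J0 p q a"
  obtain h0 h1 h2 h3 where
   h: "h0 \<in> polyfun" "h1 \<in> polyfun" "h2 \<in> polyfun" "h3 \<in> polyfun"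
   "f = (\<lambda>x. h0 x * x 0 ^ (q - p) + h1 x * x 2 + h2 x * x 4 + h3 x * M p q a x)"
    using \<open>f \<in> J0 p q a\<close> unfolding J0_mem by blast
  obtain k0 k1 k2 k3 where
   k: "k0 \<in> polyfun" "k1 \<in> polyfun" "k2 \<in> polyfun" "k3 \<in> polyfun"
   "g = (\<lambda>x. k0 x * x 0 ^ (q - p) + k1 x * x 2 + k2 x * x 4 + k3 x * M p q a x)"
    using \<open>g \<in> J0 p q a\<close> unfolding J0_mem by blast
  show "(\<lambda>x. f x + g x) \<in> J0 p q a" unfolding J0_mem
    by (rule exI[of _ "\<lambda>x. h0 x + k0 x"], rule exI[of _ "\<lambda>x. h1 x + k1 x"],
        rule exI[of _ "\<lambda>x. h2 x + k2 x"], rule exI[of _ "\<lambda>x. h3 x + k3 x"])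
      (auto simp: h k distrib_right intro!: pf_add)
next
  fix f h assume "f \<in> J0 p q a" "h \<in> polyfun"
  then obtain h0 h1 h2 h3 where
   hh: "h0 \<in> polyfun" "h1 \<in> polyfun" "h2 \<in> polyfun" "h3 \<in> polyfun"
   "f = (\<lambda>x. h0 x * x 0 ^ (q - p) + h1 x * x 2 + h2 x * x 4 + h3 x * M p q a x)"
    unfolding J0_mem by blast
  show "(\<lambda>x. h x * f x) \<in> J0 p q a" unfolding J0_mem
    by (rule exI[of _ "\<lambda>x. h x * h0 x"], rule exI[of _ "\<lambda>x. h x * h1 x"],
        rule exI[of _ "\<lambda>x. h x * h2 x"], rule exI[of _ "\<lambda>x. h x * h3 x"])
      (auto simp: hh distrib_left mult.assoc intro!: pf_mult \<open>h \<in> polyfun\<close>)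
qed

lemma J0_g0: "h \<in> polyfun \<Longrightarrow> (\<lambda>x. h x * x 0 ^ (q - p)) \<in> J0 p q a"
  unfolding J0_mem by (rule exI[of _ h], rule exI[of _ "\<lambda>x. 0"], rule exI[of _ "\<lambda>x. 0"], rule exI[of _ "\<lambda>x. 0"])
   (auto intro: pf_const)
lemma J0_g2: "h \<in> polyfun \<Longrightarrow> (\<lambda>x. h x * x 2) \<in> J0 p q a"
  unfolding J0_mem by (rule exI[of _ "\<lambda>x. 0"], rule exI[of _ h], rule exI[of _ "\<lambda>x. 0"], rule exI[of _ "\<lambda>x. 0"])
   (auto intro: pf_const)
lemma J0_g4: "h \<in> polyfun \<Longrightarrow> (\<lambda>x. h x * x 4) \<in> J0 p q a"
  unfolding J0_mem by (rule exI[of _ "\<lambda>x. 0"], rule exI[of _ "\<lambda>x. 0"], rule exI[of _ h], rule exI[of _ "\<lambda>x. 0"])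
   (auto intro: pf_const)
lemma J0_gM: "h \<in> polyfun \<Longrightarrow> (\<lambda>x. h x * M p q a x) \<in> J0 p q a"
  unfolding J0_mem by (rule exI[of _ "\<lambda>x. 0"], rule exI[of _ "\<lambda>x. 0"], rule exI[of _ "\<lambda>x. 0"], rule exI[of _ h])
   (auto intro: pf_const)

lemma gact_simps: "gact p q t \<zeta> x 0 = t * x 0" "gact p q t \<zeta> x 1 = inverse (t ^ p * \<zeta>) * x 1"
  "gact p q t \<zeta> x 2 = inverse (t ^ p * \<zeta>) * x 2" "gact p q t \<zeta> x 3 = t ^ q * \<zeta> * x 3"
  "gact p q t \<zeta> x 4 = t ^ q * \<zeta> * x 4" "gact p q t \<zeta> x (Suc 0) = inverse (t ^ p * \<zeta>) * x (Suc 0)"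
  by (simp_all add: gact_def)

lemma bact_simps: "bact \<alpha> \<beta> x 0 = x 0" "bact \<alpha> \<beta> x 1 = \<alpha> * x 1 + \<beta> * x 2"
  "bact \<alpha> \<beta> x 2 = inverse \<alpha> * x 2" "bact \<alpha> \<beta> x 3 = \<alpha> * x 3 + \<beta> * x 4"
  "bact \<alpha> \<beta> x 4 = inverse \<alpha> * x 4" "bact \<alpha> \<beta> x (Suc 0) = \<alpha> * x (Suc 0) + \<beta> * x 2"
  by (simp_all add: bact_def)

lemma M_gact: "M p q a (gact p q t \<zeta> x) = (inverse (t ^ p * \<zeta>) ^ (a * q) * (t ^ q * \<zeta>) ^ (a * p)) * M p q a x"
proof -
  have "M p q a (gact p q t \<zeta> x) = (inverse (t ^ p * \<zeta>) * x 1) ^ (a * q) * (t ^ q * \<zeta> * x 3) ^ (a * p)"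
    by (simp add: M_def gact_simps)
  also have "\<dots> = (inverse (t ^ p * \<zeta>) ^ (a * q) * (t ^ q * \<zeta>) ^ (a * p)) * (x 1 ^ (a * q) * x 3 ^ (a * p))"
    by (simp add: power_mult_distrib)
  finally show ?thesis by (simp add: M_def)
qed

lemma J0_gstable: "f \<in> J0 p q a \<Longrightarrow> (\<lambda>x. f (gact p q t \<zeta> x)) \<in> J0 p q a"
proof -
  assume "f \<in> J0 p q a"
  then obtain h0 h1 h2 h3 where
   hh: "h0 \<in> polyfun" "h1 \<in> polyfun" "h2 \<in> polyfun" "h3 \<in> polyfun"
   "f = (\<lambda>x. h0 x * x 0 ^ (q - p) + h1 x * x 2 + h2 x * x 4 + h3 x * M p q a x)"
    unfolding J0_mem by blast
  have c: "(\<lambda>x. h (gact p q t \<zeta> x)) \<in> polyfun" if "h \<in> polyfun" for h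
    using pf_comp[OF that gact_pf] .
  have eq: "f (gact p q t \<zeta> x) = (h0 (gact p q t \<zeta> x) * t ^ (q - p)) * x 0 ^ (q - p)
    + (h1 (gact p q t \<zeta> x) * inverse (t ^ p * \<zeta>)) * x 2 + (h2 (gact p q t \<zeta> x) * (t ^ q * \<zeta>)) * x 4
    + (h3 (gact p q t \<zeta> x) * (inverse (t ^ p * \<zeta>) ^ (a * q) * (t ^ q * \<zeta>) ^ (a * p))) * M p q a x" for x
    unfolding hh(5) M_gact by (simp only: gact_simps power_mult_distrib mult.assoc)
  show ?thesis unfolding J0_mem
    apply (rule exI[of _ "\<lambda>x. h0 (gact p q t \<zeta> x) * t ^ (q - p)"],
        rule exI[of _ "\<lambda>x. h1 (gact p q t \<zeta> x) * inverse (t ^ p * \<zeta>)"],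
        rule exI[of _ "\<lambda>x. h2 (gact p q t \<zeta> x) * (t ^ q * \<zeta>)"],
        rule exI[of _ "\<lambda>x. h3 (gact p q t \<zeta> x) * (inverse (t ^ p * \<zeta>) ^ (a * q) * (t ^ q * \<zeta>) ^ (a * p))"])
    apply (intro conjI pf_mult c[OF hh(1)] c[OF hh(2)] c[OF hh(3)] c[OF hh(4)] pf_const)
    apply (rule ext, rule eq)
    done
qed

lemma pow_split: "u \<in> polyfun \<Longrightarrow> w \<in> polyfun \<Longrightarrow> v \<in> polyfun \<Longrightarrow>
  \<exists>P\<in>polyfun. \<forall>x. (u x + v x * w x) ^ N = u x ^ N + v x * P x"
proof (induction N)
  case 0
  then show ?case by (intro bexI[of _ "\<lambda>x. 0"]) (auto intro: pf_const)
next
  case (Suc N)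
  then obtain P where P: "P \<in> polyfun" "\<forall>x. (u x + v x * w x) ^ N = u x ^ N + v x * P x" by blast
  show ?case
    apply (rule bexI[of _ "\<lambda>x. P x * u x + u x ^ N * w x + v x * P x * w x"])
    apply (simp add: P(2) algebra_simps)
    apply (intro pf_add pf_mult pf_pow P Suc.prems)
    done
qed

lemma aux_prod: "(A::complex) = a1 + x2 * P \<Longrightarrow> B = b1 + x4 * R \<Longrightarrow> A * B = a1 * b1 + x2 * (P * B) + x4 * (a1 * R)"
  by (simp add: algebra_simps)

lemma aux_eq: "(H0::complex) * X0 + H1 * (ia * x2) + H2 * (ia * x4) + H3 * (c * MM + x2 * A + x4 * B)
  = H0 * X0 + (H1 * ia + H3 * A) * x2 + (H2 * ia + H3 * B) * x4 + (H3 * c) * MM"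
  by (simp add: algebra_simps)

lemma J0_bstable: "\<alpha> \<noteq> 0 \<Longrightarrow> f \<in> J0 p q a \<Longrightarrow> (\<lambda>x. f (bact \<alpha> \<beta> x)) \<in> J0 p q a"
proof -
  assume "\<alpha> \<noteq> 0" "f \<in> J0 p q a"
  then obtain h0 h1 h2 h3 where
   hh: "h0 \<in> polyfun" "h1 \<in> polyfun" "h2 \<in> polyfun" "h3 \<in> polyfun"
   "f = (\<lambda>x. h0 x * x 0 ^ (q - p) + h1 x * x 2 + h2 x * x 4 + h3 x * M p q a x)"
    unfolding J0_mem by blast
  have c: "(\<lambda>x. h (bact \<alpha> \<beta> x)) \<in> polyfun" if "h \<in> polyfun" for h
    using pf_comp[OF that bact_pf] .
  obtain P1 where P1: "P1 \<in> polyfun" "\<forall>x. (\<alpha> * x 1 + x 2 * \<beta>) ^ (a * q) = (\<alpha> * x 1) ^ (a * q) + x 2 * P1 x"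
    using pow_split[OF pf_x[of 1 \<alpha>] pf_const[of \<beta>] pf_coord[of 2], of "a * q"] by auto
  obtain P3 where P3: "P3 \<in> polyfun" "\<forall>x. (\<alpha> * x 3 + x 4 * \<beta>) ^ (a * p) = (\<alpha> * x 3) ^ (a * p) + x 4 * P3 x"
    using pow_split[OF pf_x[of 3 \<alpha>] pf_const[of \<beta>] pf_coord[of 4], of "a * p"] by auto
  have Mb: "M p q a (bact \<alpha> \<beta> x) = \<alpha> ^ (a * q + a * p) * M p q a x
     + x 2 * (P1 x * (\<alpha> * x 3 + x 4 * \<beta>) ^ (a * p)) + x 4 * ((\<alpha> * x 1) ^ (a * q) * P3 x)" for x
  proof -
    have "M p q a (bact \<alpha> \<beta> x) = (\<alpha> * x 1 + x 2 * \<beta>) ^ (a * q) * (\<alpha> * x 3 + x 4 * \<beta>) ^ (a * p)"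
      by (simp add: M_def bact_simps mult.commute)
    also have "\<dots> = (\<alpha> * x 1) ^ (a * q) * (\<alpha> * x 3) ^ (a * p)
      + x 2 * (P1 x * (\<alpha> * x 3 + x 4 * \<beta>) ^ (a * p)) + x 4 * ((\<alpha> * x 1) ^ (a * q) * P3 x)"
      by (rule aux_prod[OF P1(2)[rule_format] P3(2)[rule_format]])
    also have "(\<alpha> * x 1) ^ (a * q) * (\<alpha> * x 3) ^ (a * p) = \<alpha> ^ (a * q + a * p) * M p q a x"
      by (simp add: M_def power_mult_distrib power_add)
    finally show ?thesis .
  qed
  have eq: "f (bact \<alpha> \<beta> x) = h0 (bact \<alpha> \<beta> x) * x 0 ^ (q - p)
     + (h1 (bact \<alpha> \<beta> x) * inverse \<alpha> + h3 (bact \<alpha> \<beta> x) * (P1 x * (\<alpha> * x 3 + x 4 * \<beta>) ^ (a * p))) * x 2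
     + (h2 (bact \<alpha> \<beta> x) * inverse \<alpha> + h3 (bact \<alpha> \<beta> x) * ((\<alpha> * x 1) ^ (a * q) * P3 x)) * x 4
     + (h3 (bact \<alpha> \<beta> x) * \<alpha> ^ (a * q + a * p)) * M p q a x" for x
    unfolding hh(5) Mb bact_simps by (rule aux_eq)
  show ?thesis unfolding J0_mem
    apply (rule exI[of _ "\<lambda>x. h0 (bact \<alpha> \<beta> x)"],
        rule exI[of _ "\<lambda>x. h1 (bact \<alpha> \<beta> x) * inverse \<alpha> + h3 (bact \<alpha> \<beta> x) * (P1 x * (\<alpha> * x 3 + x 4 * \<beta>) ^ (a * p))"],
        rule exI[of _ "\<lambda>x. h2 (bact \<alpha> \<beta> x) * inverse \<alpha> + h3 (bact \<alpha> \<beta> x) * ((\<alpha> * x 1) ^ (a * q) * P3 x)"],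
        rule exI[of _ "\<lambda>x. h3 (bact \<alpha> \<beta> x) * \<alpha> ^ (a * q + a * p)"])
    apply (intro conjI)
    apply (auto intro!: pf_mult pf_add c[OF hh(1)] c[OF hh(2)] c[OF hh(3)] c[OF hh(4)] pf_const P1(1) P3(1) pf_pow pf_x pf_coord)[4]
    apply (rule ext, rule eq)
    done
qed


section \<open>Weights and separation\<close>

definition Gst :: "nat \<Rightarrow> nat \<Rightarrow> nat \<Rightarrow> pfun set \<Rightarrow> bool" where
  "Gst p q m I \<longleftrightarrow> (\<forall>(t, \<zeta>) \<in> Ggrp m. \<forall>f \<in> I. (\<lambda>x. f (gact p q t \<zeta> x)) \<in> I)"

definition wv :: "nat \<Rightarrow> nat \<Rightarrow> nat \<Rightarrow> (complex \<Rightarrow> complex \<Rightarrow> complex) \<Rightarrow> pfun \<Rightarrow> bool" where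
  "wv p q m \<chi> h \<longleftrightarrow> (\<forall>(t, \<zeta>) \<in> Ggrp m. \<forall>x. h (gact p q t \<zeta> x) = \<chi> t \<zeta> * h x)"

lemma sep:
  assumes I: "is_pf_ideal I" and G: "Gst p q m I"
  shows "finite F \<Longrightarrow> (\<forall>k\<in>F. h k \<in> polyfun \<and> wv p q m (\<chi> k) (h k)) \<Longrightarrow>
    (\<forall>k\<in>F. \<forall>k'\<in>F. k \<noteq> k' \<longrightarrow> (\<exists>(t, \<zeta>)\<in>Ggrp m. \<chi> k t \<zeta> \<noteq> \<chi> k' t \<zeta>)) \<Longrightarrow>
    (\<lambda>x. \<Sum>k\<in>F. h k x) \<in> I \<Longrightarrow> \<forall>k\<in>F. h k \<in> I"
proof (induction F arbitrary: h rule: finite_induct)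
  case empty
  then show ?case by simp
next
  case (insert k0 F)
  define tot where "tot = (\<lambda>x. \<Sum>k\<in>insert k0 F. h k x)"
  have totI: "tot \<in> I" using insert.prems(3) by (simp add: tot_def)
  have rest: "\<forall>k\<in>F. h k \<in> I"
  proof
    fix k1 assume k1: "k1 \<in> F"
    then have "k1 \<noteq> k0" using insert.hyps(2) by blast
    then obtain t \<zeta> where tz: "(t, \<zeta>) \<in> Ggrp m" "\<chi> k1 t \<zeta> \<noteq> \<chi> k0 t \<zeta>"
      using insert.prems(2) k1 by fastforce
    define h' where "h' = (\<lambda>k x. (\<chi> k t \<zeta> - \<chi> k0 t \<zeta>) * h k x)"
    have wvh: "h k (gact p q t \<zeta> x) = \<chi> k t \<zeta> * h k x" if "k \<in> insert k0 F" for k x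
      using insert.prems(1) that tz(1) unfolding wv_def by fastforce
    have "(\<lambda>x. tot (gact p q t \<zeta> x) - \<chi> k0 t \<zeta> * tot x) \<in> I"
      using id_diff[OF I _ id_smult[OF I totI]] G tz(1) totI unfolding Gst_def by fastforce
    moreover have "tot (gact p q t \<zeta> x) - \<chi> k0 t \<zeta> * tot x = (\<Sum>k\<in>F. h' k x)" for x
    proof -
      have "tot (gact p q t \<zeta> x) - \<chi> k0 t \<zeta> * tot x = (\<Sum>k\<in>insert k0 F. h' k x)"
        unfolding tot_def h'_def using wvh
        by (simp add: sum_distrib_left sum_subtractf[symmetric] algebra_simps del: sum.insert)
      also have "\<dots> = (\<Sum>k\<in>F. h' k x)" using insert.hyps by (simp add: h'_def)
      finally show ?thesis .
    qed
    ultimately have "(\<lambda>x. \<Sum>k\<in>F. h' k x) \<in> I" by (rule id_cong)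
    moreover have "\<forall>k\<in>F. h' k \<in> polyfun \<and> wv p q m (\<chi> k) (h' k)"
      using insert.prems(1) unfolding h'_def wv_def by (fastforce intro: pf_smult)
    moreover have "\<forall>k\<in>F. \<forall>k'\<in>F. k \<noteq> k' \<longrightarrow> (\<exists>(t, \<zeta>)\<in>Ggrp m. \<chi> k t \<zeta> \<noteq> \<chi> k' t \<zeta>)"
      using insert.prems(2) by blast
    ultimately have "h' k1 \<in> I" using insert.IH k1 by blast
    then have "(\<lambda>x. inverse (\<chi> k1 t \<zeta> - \<chi> k0 t \<zeta>) * h' k1 x) \<in> I" by (rule id_smult[OF I])
    then show "h k1 \<in> I" by (rule id_cong) (use tz(2) in \<open>simp add: h'_def\<close>)
  qed
  have "(\<lambda>x. tot x - (\<Sum>k\<in>F. h k x)) \<in> I" by (rule id_diff[OF I totI id_sum[OF I insert.hyps(1)]]) (use rest in blast)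
  then have "h k0 \<in> I" by (rule id_cong) (use insert.hyps in \<open>simp add: tot_def\<close>)
  then show ?case using rest by blast
qed

lemma sep2:
  assumes I: "is_pf_ideal I" and G: "Gst p q m I" and fin: "finite F"
    and wvs: "\<forall>k\<in>F. h k \<in> polyfun \<and> wv p q m (\<chi> k) (h k)"
    and dist: "\<forall>k\<in>F. \<forall>k'\<in>F. k \<noteq> k' \<longrightarrow> (\<exists>(t, \<zeta>)\<in>Ggrp m. \<chi> k t \<zeta> \<noteq> \<chi> k' t \<zeta>)"
    and f: "f = (\<lambda>x. \<Sum>k\<in>F. h k x)"
    and W: "\<forall>(t, \<zeta>)\<in>Ggrp m. (\<lambda>x. f (gact p q t \<zeta> x) - \<chi>0 t \<zeta> * f x) \<in> I"
    and k1: "k1 \<in> F" and tz: "(t, \<zeta>) \<in> Ggrp m" "\<chi> k1 t \<zeta> \<noteq> \<chi>0 t \<zeta>"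
  shows "h k1 \<in> I"
proof -
  define h' where "h' = (\<lambda>k x. (\<chi> k t \<zeta> - \<chi>0 t \<zeta>) * h k x)"
  have wvh: "h k (gact p q t \<zeta> x) = \<chi> k t \<zeta> * h k x" if "k \<in> F" for k x
    using wvs that tz(1) unfolding wv_def by fastforce
  have "(\<lambda>x. f (gact p q t \<zeta> x) - \<chi>0 t \<zeta> * f x) \<in> I" using W tz(1) by fastforce
  moreover have "f (gact p q t \<zeta> x) - \<chi>0 t \<zeta> * f x = (\<Sum>k\<in>F. h' k x)" for x
    unfolding f h'_def using wvh
    by (simp add: sum_distrib_left sum_subtractf[symmetric] algebra_simps)
  ultimately have "(\<lambda>x. \<Sum>k\<in>F. h' k x) \<in> I" by (rule id_cong)
  moreover have "\<forall>k\<in>F. h' k \<in> polyfun \<and> wv p q m (\<chi> k) (h' k)"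
    using wvs unfolding h'_def wv_def by (fastforce intro: pf_smult)
  ultimately have "h' k1 \<in> I" using sep[OF I G fin _ dist] k1 by blast
  then have "(\<lambda>x. inverse (\<chi> k1 t \<zeta> - \<chi>0 t \<zeta>) * h' k1 x) \<in> I" by (rule id_smult[OF I])
  then show "h k1 \<in> I" by (rule id_cong) (use tz(2) in \<open>simp add: h'_def\<close>)
qed


section \<open>Characters\<close>

lemma mono5: "mono \<alpha> x = x 0 ^ \<alpha> 0 * x 1 ^ \<alpha> 1 * x 2 ^ \<alpha> 2 * x 3 ^ \<alpha> 3 * x 4 ^ \<alpha> 4"
  by (simp add: monoK_def numeral_eq_Suc lessThan_Suc mult_ac)

lemma chi_coef:
  fixes t \<zeta> :: complex
  assumes "t \<noteq> 0" "\<zeta> \<noteq> 0"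
  shows "t ^ i * inverse (t ^ p * \<zeta>) ^ b * (t ^ q * \<zeta>) ^ c = chi (int i - int p * int b + int q * int c) (int c - int b) t \<zeta>"
proof -
  have "chi (int i - int p * int b + int q * int c) (int c - int b) t \<zeta>
      = (t powi int i / t powi (int (p * b))) * t powi (int (q * c)) * (\<zeta> powi int c / \<zeta> powi int b)"
    unfolding chi_def using assms by (simp add: power_int_add power_int_diff)
  also have "\<dots> = t ^ i / t ^ (p * b) * t ^ (q * c) * (\<zeta> ^ c / \<zeta> ^ b)"
    by (simp only: power_int_of_nat)
  also have "\<dots> = t ^ i * inverse (t ^ p * \<zeta>) ^ b * (t ^ q * \<zeta>) ^ c"
    using assms by (simp add: power_mult[symmetric] power_mult_distrib field_simps power_inverse)
  finally show ?thesis by simp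
qed

lemma Ggrp_nz: "0 < m \<Longrightarrow> (t, \<zeta>) \<in> Ggrp m \<Longrightarrow> t \<noteq> 0 \<and> \<zeta> \<noteq> 0"
  unfolding Ggrp_def by (auto simp: power_0_left)

definition wn :: "nat \<Rightarrow> nat \<Rightarrow> (nat \<Rightarrow> nat) \<Rightarrow> int" where
  "wn p q \<alpha> = int (\<alpha> 0) - int p * int (\<alpha> 1 + \<alpha> 2) + int q * int (\<alpha> 3 + \<alpha> 4)"
definition wd :: "(nat \<Rightarrow> nat) \<Rightarrow> int" where
  "wd \<alpha> = int (\<alpha> 3 + \<alpha> 4) - int (\<alpha> 1 + \<alpha> 2)"

lemma mono_gact: "t \<noteq> 0 \<Longrightarrow> \<zeta> \<noteq> 0 \<Longrightarrow> mono \<alpha> (gact p q t \<zeta> x) = chi (wn p q \<alpha>) (wd \<alpha>) t \<zeta> * mono \<alpha> x"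
proof -
  assume nz: "t \<noteq> 0" "\<zeta> \<noteq> 0"
  have "mono \<alpha> (gact p q t \<zeta> x) = (t ^ \<alpha> 0 * inverse (t ^ p * \<zeta>) ^ (\<alpha> 1 + \<alpha> 2) * (t ^ q * \<zeta>) ^ (\<alpha> 3 + \<alpha> 4)) * mono \<alpha> x"
    unfolding mono5 by (simp add: gact_simps power_mult_distrib power_add mult_ac)
  then show ?thesis using chi_coef[OF nz, of "\<alpha> 0" p "\<alpha> 1 + \<alpha> 2" q "\<alpha> 3 + \<alpha> 4"]
    by (simp add: wn_def wd_def)
qed

lemma mono_wv: "0 < m \<Longrightarrow> wv p q m (chi (wn p q \<alpha>) (wd \<alpha>)) (mono \<alpha>)"
  unfolding wv_def using mono_gact Ggrp_nz by blast

lemma chi_sep: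
  assumes m: "0 < m" and H: "\<forall>(t, \<zeta>)\<in>Ggrp m. chi n d t \<zeta> = chi n' d' t \<zeta>"
  shows "n = n' \<and> int m dvd (d - d')"
proof
  have "(2, 1) \<in> Ggrp m" by (simp add: Ggrp_def)
  then have "(2::complex) powi n = 2 powi n'" using H by (auto simp: chi_def)
  then have e: "(2::real) powi n = 2 powi n'"
    by (metis of_real_eq_of_real_power_int_cancel_iff of_real_numeral)
  show "n = n'"
  proof (rule ccontr)
    assume "n \<noteq> n'"
    then have "n < n' \<or> n' < n" by auto
    then show False using e power_int_strict_increasing[of n n' "2::real"] power_int_strict_increasing[of n' n "2::real"]
      by auto
  qed
next
  define \<omega> where "\<omega> = cis (2 * pi / m)"
  have "\<omega> ^ m = 1" unfolding \<omega>_def DeMoivre using m by simp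
  then have "(1, \<omega>) \<in> Ggrp m" by (simp add: Ggrp_def)
  then have "\<omega> powi d = \<omega> powi d'" using H by (auto simp: chi_def)
  then have "cis (of_int d * (2 * pi / m)) = cis (of_int d' * (2 * pi / m))"
    unfolding \<omega>_def cis_power_int .
  then have "cis (of_int d * (2 * pi / m)) / cis (of_int d' * (2 * pi / m)) = 1" by simp
  then have "cis (of_int (d - d') * (2 * pi / m)) = 1" using m unfolding cis_divide by (simp add: field_simps)
  then have "cos (of_int (d - d') * (2 * pi / m)) = 1" by (metis Re_complex_of_real cis.sel(1) one_complex.sel(1))
  then obtain k :: int where k: "of_int (d - d') * (2 * pi / m) = of_int k * 2 * pi" using cos_one_2pi_int by blast
  have "real_of_int (d - d') * (2 * pi) = (real_of_int (d - d') * (2 * pi / m)) * m" using m by simp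
  also have "\<dots> = (of_int k * m) * (2 * pi)" unfolding k by (simp add: mult_ac)
  finally have "real_of_int (d - d') * (2 * pi) = (of_int k * m) * (2 * pi)" .
  then have "real_of_int (d - d') = of_int k * m" by simp
  then have "real_of_int (d - d') = real_of_int (k * int m)" by simp
  then have "d - d' = k * int m" by (simp only: of_int_eq_iff)
  then show "int m dvd (d - d')" by simp
qed

lemma chi_same:
  assumes "(t, \<zeta>) \<in> Ggrp m" "0 < m" "n = n'" "int m dvd (d - d')"
  shows "chi n d t \<zeta> = chi n' d' t \<zeta>"
proof -
  obtain k where k: "d = d' + int m * k" using assms(4) by (metis add_diff_cancel_left' diff_add_cancel dvd_def)
  have z: "\<zeta> ^ m = 1" "\<zeta> \<noteq> 0" using assms(1,2) by (auto simp: Ggrp_def power_0_left)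
  have "\<zeta> powi d = \<zeta> powi d' * (\<zeta> powi int m) powi k"
    unfolding k using z(2) by (simp add: power_int_add power_int_mult)
  also have "\<zeta> powi int m = 1" using z(1) by simp
  finally show ?thesis unfolding chi_def using assms(3) by simp
qed


section \<open>Standard monomials\<close>

definition std :: "nat \<Rightarrow> nat \<Rightarrow> nat \<Rightarrow> (nat \<Rightarrow> nat) \<Rightarrow> bool" where
  "std p q a \<alpha> \<longleftrightarrow> \<alpha> \<in> EE \<and> \<alpha> 2 = 0 \<and> \<alpha> 4 = 0 \<and> \<alpha> 0 < q - p \<and> \<not> (a * q \<le> \<alpha> 1 \<and> a * p \<le> \<alpha> 3)"

definition subv :: "(nat \<Rightarrow> nat) \<Rightarrow> (nat \<Rightarrow> nat) \<Rightarrow> (nat \<Rightarrow> nat)" where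
  "subv \<alpha> \<beta> = (\<lambda>i. \<alpha> i - \<beta> i)"

lemma mono_split: "\<beta> \<le> \<alpha> \<Longrightarrow> mono \<alpha> x = mono (subv \<alpha> \<beta>) x * mono \<beta> x"
proof -
  assume "\<beta> \<le> \<alpha>"
  then have "addv (subv \<alpha> \<beta>) \<beta> = \<alpha>" unfolding addv_def subv_def le_fun_def by auto
  then show ?thesis using monoK_addv[of 5 "subv \<alpha> \<beta>" \<beta> x] by simp
qed

lemma mono_pf: "mono \<alpha> \<in> polyfun"
  unfolding monoK_def by (intro pf_prod pf_pow pf_coord) auto

definition v0 :: "nat \<Rightarrow> nat \<Rightarrow> nat \<Rightarrow> nat" where "v0 p q = (\<lambda>i. if i = 0 then q - p else 0)"
definition vM :: "nat \<Rightarrow> nat \<Rightarrow> nat \<Rightarrow> nat \<Rightarrow> nat" where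
  "vM p q a = (\<lambda>i. if i = 1 then a * q else if i = 3 then a * p else 0)"

lemma mono_v0: "mono (v0 p q) x = x 0 ^ (q - p)" by (simp add: mono5 v0_def)
lemma mono_vM: "mono (vM p q a) x = M p q a x" by (simp add: mono5 vM_def M_def)
lemma mono_dl2: "mono (dl 2) x = x 2" by (simp add: mono_dl)
lemma mono_dl4: "mono (dl 4) x = x 4" by (simp add: mono_dl)

lemma v_EE: "v0 p q \<in> EE" "vM p q a \<in> EE" "dl 2 \<in> EE" "dl 4 \<in> EE"
  by (auto simp: EE_def v0_def vM_def dl_def)

lemma nonstd_J0: "\<alpha> \<in> EE \<Longrightarrow> \<not> std p q a \<alpha> \<Longrightarrow> mono \<alpha> \<in> J0 p q a"
proof -
  assume E: "\<alpha> \<in> EE" and ns: "\<not> std p q a \<alpha>"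
  have mk: "mono \<alpha> \<in> J0 p q a" if le: "\<beta> \<le> \<alpha>" and g: "\<And>h. h \<in> polyfun \<Longrightarrow> (\<lambda>x. h x * mono \<beta> x) \<in> J0 p q a" for \<beta>
    by (rule id_cong[OF g[OF mono_pf[of "subv \<alpha> \<beta>"]]]) (simp add: mono_split[OF le])
  have g0: "(\<lambda>x. h x * mono (v0 p q) x) \<in> J0 p q a" if "h \<in> polyfun" for h
    using J0_g0[OF that] by (simp add: mono_v0)
  have g2: "(\<lambda>x. h x * mono (dl 2) x) \<in> J0 p q a" if "h \<in> polyfun" for h
    using J0_g2[OF that] by (simp add: mono_dl2)
  have g4: "(\<lambda>x. h x * mono (dl 4) x) \<in> J0 p q a" if "h \<in> polyfun" for h
    using J0_g4[OF that] by (simp add: mono_dl4)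
  have gM: "(\<lambda>x. h x * mono (vM p q a) x) \<in> J0 p q a" if "h \<in> polyfun" for h
    using J0_gM[OF that] by (simp add: mono_vM)
  from ns E consider "\<alpha> 2 \<noteq> 0" | "\<alpha> 4 \<noteq> 0" | "q - p \<le> \<alpha> 0" | "a * q \<le> \<alpha> 1 \<and> a * p \<le> \<alpha> 3"
    unfolding std_def by linarith
  then show ?thesis
  proof cases
    case 1
    then have "dl 2 \<le> \<alpha>" by (auto simp: le_fun_def dl_def)
    then show ?thesis using mk g2 by blast
  next
    case 2
    then have "dl 4 \<le> \<alpha>" by (auto simp: le_fun_def dl_def)
    then show ?thesis using mk g4 by blast
  next
    case 3
    then have "v0 p q \<le> \<alpha>" by (auto simp: le_fun_def v0_def)
    then show ?thesis using mk g0 by blast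
  next
    case 4
    then have "vM p q a \<le> \<alpha>" by (auto simp: le_fun_def vM_def)
    then show ?thesis using mk gM by blast
  qed
qed

lemma std_notin_J0: "std p q a \<alpha> \<Longrightarrow> mono \<alpha> \<notin> J0 p q a"
proof
  assume st: "std p q a \<alpha>" and "mono \<alpha> \<in> J0 p q a"
  then obtain h0 h1 h2 h3 where
   hh: "h0 \<in> polyfun" "h1 \<in> polyfun" "h2 \<in> polyfun" "h3 \<in> polyfun"
   "mono \<alpha> = (\<lambda>x. h0 x * x 0 ^ (q - p) + h1 x * x 2 + h2 x * x 4 + h3 x * M p q a x)"
    unfolding J0_mem by blast
  have e: "mono \<alpha> = (\<lambda>x. h0 x * mono (v0 p q) x + h1 x * mono (dl 2) x + h2 x * mono (dl 4) x + h3 x * mono (vM p q a) x)"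
    unfolding hh(5) mono_v0 mono_dl2 mono_dl4 mono_vM ..
  have "hasrep ({\<gamma>\<in>EE. v0 p q \<le> \<gamma>} \<union> {\<gamma>\<in>EE. dl 2 \<le> \<gamma>} \<union> {\<gamma>\<in>EE. dl 4 \<le> \<gamma>} \<union> {\<gamma>\<in>EE. vM p q a \<le> \<gamma>})
     (\<lambda>x. h0 x * mono (v0 p q) x + h1 x * mono (dl 2) x + h2 x * mono (dl 4) x + h3 x * mono (vM p q a) x)"
    by (intro hasrep_add hasrep_shift hasrep_polyfun hh v_EE)
  moreover have "\<alpha> \<notin> {\<gamma>\<in>EE. v0 p q \<le> \<gamma>} \<union> {\<gamma>\<in>EE. dl 2 \<le> \<gamma>} \<union> {\<gamma>\<in>EE. dl 4 \<le> \<gamma>} \<union> {\<gamma>\<in>EE. vM p q a \<le> \<gamma>}"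
  proof -
    have "\<not> v0 p q \<le> \<alpha>" using st unfolding std_def le_fun_def v0_def by (metis not_le)
    moreover have "\<not> dl 2 \<le> \<alpha>" using st unfolding std_def le_fun_def dl_def by (metis le_zero_eq one_neq_zero)
    moreover have "\<not> dl 4 \<le> \<alpha>" using st unfolding std_def le_fun_def dl_def by (metis le_zero_eq one_neq_zero)
    moreover have "\<not> vM p q a \<le> \<alpha>" using st unfolding std_def le_fun_def vM_def
      by (metis numeral_eq_one_iff semiring_norm(84))
    ultimately show ?thesis by blast
  qed
  moreover have "\<alpha> \<in> EE" using st by (simp add: std_def)
  ultimately have "(\<lambda>x. h0 x * mono (v0 p q) x + h1 x * mono (dl 2) x + h2 x * mono (dl 4) x + h3 x * mono (vM p q a) x) \<noteq> mono \<alpha>"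
    by (intro hasrep_not_mono) auto
  then show False using e by simp
qed

lemma normal_form: "f \<in> polyfun \<Longrightarrow> \<exists>S c. finite S \<and> (\<forall>\<alpha>\<in>S. std p q a \<alpha>) \<and>
   (\<lambda>x. f x - (\<Sum>\<alpha>\<in>S. c \<alpha> * mono \<alpha> x)) \<in> J0 p q a"
proof -
  assume "f \<in> polyfun"
  then obtain S0 c where h: "finite S0" "S0 \<subseteq> EE" "f = (\<lambda>x. \<Sum>\<alpha>\<in>S0. c \<alpha> * mono \<alpha> x)"
    using hasrep_polyfun unfolding hasrep_def by blast
  define S where "S = {\<alpha>\<in>S0. std p q a \<alpha>}"
  have "(\<lambda>x. \<Sum>\<alpha>\<in>S0 - S. c \<alpha> * mono \<alpha> x) \<in> J0 p q a"
    using h by (intro id_sum[OF J0_ideal] id_smult[OF J0_ideal] nonstd_J0) (auto simp: S_def)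
  moreover have "(\<Sum>\<alpha>\<in>S0 - S. c \<alpha> * mono \<alpha> x) = f x - (\<Sum>\<alpha>\<in>S. c \<alpha> * mono \<alpha> x)" for x
    using h by (simp add: sum_diff S_def)
  ultimately have "(\<lambda>x. f x - (\<Sum>\<alpha>\<in>S. c \<alpha> * mono \<alpha> x)) \<in> J0 p q a" by (rule id_cong)
  moreover have "finite S" using h by (simp add: S_def)
  ultimately show ?thesis by (auto simp: S_def)
qed

lemma arith1:
  fixes Q q p a r i i' j j' k k' :: int
  assumes Q: "Q = q - p" "0 < Q" and i: "0 \<le> i" "i < Q" "0 \<le> i'" "i' < Q"
    and e1: "i - p*j + q*k = i' - p*j' + q*k'" and e2: "(k - j) - (k' - j') = a*Q*r"
  shows "i = i' \<and> j' = j + a*q*r \<and> k' = k + a*p*r"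
proof -
  have h0: "q * ((k - j) - (k' - j')) = q * (a*Q*r)" using e2 by simp
  have r1: "q * ((k - j) - (k' - j')) = q*k - q*j - q*k' + q*j'" by algebra
  have r2: "q * (a*Q*r) = a*q*q*r - a*q*p*r" unfolding Q(1) by algebra
  have r3: "Q * ((j - j') + q*a*r) = q*j - q*j' - p*j + p*j' + a*q*q*r - a*q*p*r" unfolding Q(1) by algebra
  have "i' - i = Q * ((j - j') + q*a*r)" using e1 h0 r1 r2 r3 by linarith
  then have d: "Q dvd (i' - i)" by simp
  have "i' - i = 0"
  proof (rule ccontr)
    assume nz: "i' - i \<noteq> 0"
    obtain z where z: "i' - i = Q * z" using d by blast
    then have "z \<noteq> 0" using nz by auto
    then have "\<bar>Q * z\<bar> \<ge> Q" using Q(2) by (simp add: abs_mult)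
    then show False using i z by linarith
  qed
  then have ii: "i = i'" by simp
  then have "Q * ((j - j') + q*a*r) = 0" using \<open>i' - i = Q * ((j - j') + q*a*r)\<close> by simp
  then have "(j - j') + q*a*r = 0" using Q(2) by simp
  then have jj: "j' = j + a*q*r" by (simp add: algebra_simps)
  have r4: "a*Q*r = a*q*r - a*p*r" unfolding Q(1) by algebra
  have "k' = k + a*p*r" using e2 jj r4 by linarith
  then show ?thesis using ii jj by simp
qed

definition mk :: "nat \<Rightarrow> nat \<Rightarrow> nat \<Rightarrow> nat \<Rightarrow> nat" where
  "mk i j k = (\<lambda>l. if l = 0 then i else if l = 1 then j else if l = 3 then k else 0)"

lemma mk_simps: "mk i j k 0 = i" "mk i j k 1 = j" "mk i j k (Suc 0) = j" "mk i j k 2 = 0" "mk i j k 3 = k" "mk i j k 4 = 0"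
  by (simp_all add: mk_def)

lemma mk_EE: "mk i j k \<in> EE" by (simp add: mk_def EE_def)

lemma wn_mk: "wn p q (mk i j k) = int i - int p * int j + int q * int k"
  by (simp add: wn_def mk_simps)
lemma wd_mk: "wd (mk i j k) = int k - int j"
  by (simp add: wd_def mk_simps)
lemma std_mk: "std p q a (mk i j k) \<longleftrightarrow> i < q - p \<and> \<not> (a * q \<le> j \<and> a * p \<le> k)"
  by (simp add: std_def mk_simps mk_EE)

locale L =
  fixes p q m a :: nat
  assumes p0: "0 < p" and pq: "p < q" and mdef: "m = a * (q - p)" and a0: "0 < a"
begin

lemma m0: "0 < m" using mdef pq a0 by simp

lemma intQ: "int (q - p) = int q - int p" using pq by simp

lemma intm: "int m = int a * int q - int a * int p" using mdef pq by (simp add: of_nat_diff right_diff_distrib)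

lemma std_inj:
  assumes sa: "std p q a \<alpha>" and sb: "std p q a \<beta>" and n: "wn p q \<alpha> = wn p q \<beta>"
    and d: "int m dvd (wd \<alpha> - wd \<beta>)"
  shows "\<alpha> = \<beta>"
proof -
  obtain r where r: "wd \<alpha> - wd \<beta> = int m * r" using d by blast
  have z: "\<alpha> 2 = 0" "\<alpha> 4 = 0" "\<beta> 2 = 0" "\<beta> 4 = 0" "\<alpha> 0 < q - p" "\<beta> 0 < q - p"
    using sa sb by (auto simp: std_def)
  have ar: "int (\<alpha> 0) = int (\<beta> 0) \<and> int (\<beta> 1) = int (\<alpha> 1) + int a * int q * r \<and> int (\<beta> 3) = int (\<alpha> 3) + int a * int p * r"
  proof (rule arith1[where Q = "int q - int p"])
    show "int q - int p = int q - int p" ..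
    show "0 < int q - int p" using pq by simp
    show "0 \<le> int (\<alpha> 0)" "0 \<le> int (\<beta> 0)" by simp_all
    show "int (\<alpha> 0) < int q - int p" "int (\<beta> 0) < int q - int p" using z intQ by linarith+
    show "int (\<alpha> 0) - int p * int (\<alpha> 1) + int q * int (\<alpha> 3) = int (\<beta> 0) - int p * int (\<beta> 1) + int q * int (\<beta> 3)"
      using n z by (simp add: wn_def)
    show "(int (\<alpha> 3) - int (\<alpha> 1)) - (int (\<beta> 3) - int (\<beta> 1)) = int a * (int q - int p) * r"
      using r z by (simp add: wd_def mdef intQ)
  qed
  have r0: "r = 0"
  proof (rule ccontr)
    assume "r \<noteq> 0"
    then consider "r \<ge> 1" | "r \<le> -1" by linarith
    then show False
    proof cases
      case 1
      have "int a * int q * 1 \<le> int a * int q * r" using 1 by (intro mult_left_mono) auto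
      moreover have "int a * int p * 1 \<le> int a * int p * r" using 1 by (intro mult_left_mono) auto
      ultimately have "int a * int q \<le> int (\<beta> 1)" "int a * int p \<le> int (\<beta> 3)" using ar by linarith+
      then have "a * q \<le> \<beta> 1" "a * p \<le> \<beta> 3" by (metis of_nat_le_iff of_nat_mult)+
      then show False using sb by (simp add: std_def)
    next
      case 2
      have "int a * int q * 1 \<le> int a * int q * (- r)" using 2 by (intro mult_left_mono) auto
      moreover have "int a * int p * 1 \<le> int a * int p * (- r)" using 2 by (intro mult_left_mono) auto
      ultimately have "int a * int q \<le> int (\<alpha> 1)" "int a * int p \<le> int (\<alpha> 3)" using ar by (simp_all add: algebra_simps)
      then have "a * q \<le> \<alpha> 1" "a * p \<le> \<alpha> 3" by (metis of_nat_le_iff of_nat_mult)+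
      then show False using sa by (simp add: std_def)
    qed
  qed
  have eq: "\<alpha> 0 = \<beta> 0" "\<alpha> 1 = \<beta> 1" "\<alpha> 3 = \<beta> 3" using ar r0 by simp_all
  show "\<alpha> = \<beta>"
  proof
    fix i
    show "\<alpha> i = \<beta> i"
    proof (cases "i < 5")
      case True
      then have "i = 0 \<or> i = 1 \<or> i = 2 \<or> i = 3 \<or> i = 4" by auto
      then show ?thesis using eq z by auto
    next
      case False
      then show ?thesis using sa sb by (simp add: std_def EE_def)
    qed
  qed
qed

lemma descent: "i < q - p \<Longrightarrow> \<exists>\<alpha>. std p q a \<alpha> \<and> wn p q \<alpha> = int i - int p * int j + int q * int k
   \<and> int m dvd (wd \<alpha> - (int k - int j))"
proof (induction j arbitrary: k rule: less_induct)
  case (less j)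
  show ?case
  proof (cases "a * q \<le> j \<and> a * p \<le> k")
    case False
    then show ?thesis using less.prems
      by (intro exI[of _ "mk i j k"]) (simp add: std_mk wn_mk wd_mk)
  next
    case True
    have "0 < a * q" using a0 pq by simp
    then have "j - a * q < j" using True by linarith
    then obtain \<alpha> where \<alpha>: "std p q a \<alpha>" "wn p q \<alpha> = int i - int p * int (j - a * q) + int q * int (k - a * p)"
      "int m dvd (wd \<alpha> - (int (k - a * p) - int (j - a * q)))" using less.IH less.prems by blast
    have "int i - int p * int (j - a * q) + int q * int (k - a * p) = int i - int p * int j + int q * int k"
      using True by (simp add: of_nat_diff algebra_simps)
    moreover have "wd \<alpha> - (int k - int j) = (wd \<alpha> - (int (k - a * p) - int (j - a * q))) + int m"
    proof -
      have e: "int (k - a * p) = int k - int a * int p" "int (j - a * q) = int j - int a * int q"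
        using True by (simp_all add: of_nat_diff)
      show ?thesis unfolding e intm by (simp add: algebra_simps)
    qed
    ultimately show ?thesis using \<alpha> by (metis dvd_add dvd_refl)
  qed
qed

lemma std_exists: "\<exists>\<alpha>. std p q a \<alpha> \<and> wn p q \<alpha> = n \<and> int m dvd (wd \<alpha> - d)"
proof -
  define Q where "Q = int q - int p"
  have Q0: "0 < Q" using pq by (simp add: Q_def)
  define A where "A = (n - int q * d) div Q"
  define i where "i = (n - int q * d) mod Q"
  define R where "R = \<bar>A\<bar> + \<bar>d\<bar>"
  have i0: "0 \<le> i" "i < Q" using Q0 by (simp_all add: i_def)
  have aq: "R \<le> int a * int q * R" "R \<le> int a * int p * R"
  proof -
    have "0 < a * q" "0 < a * p" using a0 pq p0 by simp_all
    then have "1 \<le> int a * int q" "1 \<le> int a * int p" by (metis of_nat_mult of_nat_0_less_iff int_one_le_iff_zero_less)+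
    moreover have "0 \<le> R" by (simp add: R_def)
    ultimately show "R \<le> int a * int q * R" "R \<le> int a * int p * R"
      by (metis mult_le_cancel_right1 not_less)+
  qed
  define J where "J = A + int a * int q * R"
  define K where "K = A + d + int a * int p * R"
  have J0: "0 \<le> J" using aq by (simp add: J_def R_def) linarith
  have K0: "0 \<le> K" using aq by (simp add: K_def R_def) linarith
  have inat: "nat i < q - p" using i0 Q_def by linarith
  obtain \<alpha> where \<alpha>: "std p q a \<alpha>" "wn p q \<alpha> = int (nat i) - int p * int (nat J) + int q * int (nat K)"
     "int m dvd (wd \<alpha> - (int (nat K) - int (nat J)))" using descent[OF inat] by blast
  have dm: "n - int q * d = Q * A + i" by (simp add: A_def i_def)
  have "int (nat i) - int p * int (nat J) + int q * int (nat K) = i - int p * J + int q * K"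
    using i0 J0 K0 by simp
  also have "\<dots> = i + Q * A + int q * d + int a * R * (int q * int p - int p * int q)"
    by (simp add: J_def K_def Q_def algebra_simps)
  also have "\<dots> = n" using dm by simp
  finally have wn: "wn p q \<alpha> = n" using \<alpha>(2) by simp
  have "int (nat K) - int (nat J) - d = - (int m * R)"
    using J0 K0 unfolding intm by (simp add: J_def K_def algebra_simps)
  then have eqX: "wd \<alpha> - d = (wd \<alpha> - (int (nat K) - int (nat J))) - int m * R" by linarith
  have "int m dvd (wd \<alpha> - d)" unfolding eqX by (rule dvd_diff[OF \<alpha>(3) dvd_triv_left])
  then show ?thesis using \<alpha>(1) wn by blast
qed

end


context L
begin

lemma chi_distinct:
  assumes "std p q a \<alpha>" "std p q a \<beta>" "\<alpha> \<noteq> \<beta>"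
  shows "\<exists>(t, \<zeta>)\<in>Ggrp m. chi (wn p q \<alpha>) (wd \<alpha>) t \<zeta> \<noteq> chi (wn p q \<beta>) (wd \<beta>) t \<zeta>"
proof (rule ccontr)
  assume "\<not> ?thesis"
  then have "\<forall>(t, \<zeta>)\<in>Ggrp m. chi (wn p q \<alpha>) (wd \<alpha>) t \<zeta> = chi (wn p q \<beta>) (wd \<beta>) t \<zeta>" by blast
  from chi_sep[OF m0 this] have "wn p q \<alpha> = wn p q \<beta>" "int m dvd (wd \<alpha> - wd \<beta>)" by auto
  then have "\<alpha> = \<beta>" using std_inj assms(1,2) by blast
  then show False using assms(3) by simp
qed

lemma chi_distinct2:
  assumes "std p q a \<alpha>" "std p q a \<alpha>0" "wn p q \<alpha>0 = n" "int m dvd (wd \<alpha>0 - d)" "\<alpha> \<noteq> \<alpha>0"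
  shows "\<exists>(t, \<zeta>)\<in>Ggrp m. chi (wn p q \<alpha>) (wd \<alpha>) t \<zeta> \<noteq> chi n d t \<zeta>"
proof (rule ccontr)
  assume "\<not> ?thesis"
  then have "\<forall>(t, \<zeta>)\<in>Ggrp m. chi (wn p q \<alpha>) (wd \<alpha>) t \<zeta> = chi n d t \<zeta>" by blast
  from chi_sep[OF m0 this] have h: "wn p q \<alpha> = n" "int m dvd (wd \<alpha> - d)" by auto
  have "int m dvd ((wd \<alpha> - d) - (wd \<alpha>0 - d))" using h(2) assms(4) by (rule dvd_diff)
  then have "int m dvd (wd \<alpha> - wd \<alpha>0)" by simp
  then have "\<alpha> = \<alpha>0" using std_inj assms(1,2) h(1) assms(3) by metis
  then show False using assms(5) by simp
qed

lemma mono_exact: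
  assumes "wn p q \<alpha>0 = n" "int m dvd (wd \<alpha>0 - d)" "(t, \<zeta>) \<in> Ggrp m"
  shows "mono \<alpha>0 (gact p q t \<zeta> x) = chi n d t \<zeta> * mono \<alpha>0 x"
proof -
  have "t \<noteq> 0" "\<zeta> \<noteq> 0" using Ggrp_nz[OF m0 assms(3)] by auto
  then have "mono \<alpha>0 (gact p q t \<zeta> x) = chi (wn p q \<alpha>0) (wd \<alpha>0) t \<zeta> * mono \<alpha>0 x" by (rule mono_gact)
  also have "chi (wn p q \<alpha>0) (wd \<alpha>0) t \<zeta> = chi n d t \<zeta>" using chi_same[OF assms(3) m0 assms(1) assms(2)] .
  finally show ?thesis .
qed

lemma NFW:
  assumes I: "is_pf_ideal I" and G: "Gst p q m I" and J: "J0 p q a \<subseteq> I"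
    and g: "g \<in> weight_space_mod p q m I n d"
    and s0: "std p q a \<alpha>0" "wn p q \<alpha>0 = n" "int m dvd (wd \<alpha>0 - d)"
  shows "\<exists>c. (\<lambda>x. g x - c * mono \<alpha>0 x) \<in> I"
proof -
  have gp: "g \<in> polyfun" and Wg: "\<forall>(t, \<zeta>)\<in>Ggrp m. (\<lambda>x. g (gact p q t \<zeta> x) - chi n d t \<zeta> * g x) \<in> I"
    using g unfolding weight_space_mod_def by auto
  have "\<exists>S c. finite S \<and> (\<forall>\<alpha>\<in>S. std p q a \<alpha>) \<and> (\<lambda>x. g x - (\<Sum>\<alpha>\<in>S. c \<alpha> * mono \<alpha> x)) \<in> J0 p q a"
    by (rule normal_form[OF gp])
  then obtain S c where S: "finite S" "\<forall>\<alpha>\<in>S. std p q a \<alpha>" and DJ: "(\<lambda>x. g x - (\<Sum>\<alpha>\<in>S. c \<alpha> * mono \<alpha> x)) \<in> J0 p q a"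
    by (elim exE conjE)
  define R where "R = (\<lambda>x. \<Sum>\<alpha>\<in>S. c \<alpha> * mono \<alpha> x)"
  define D where "D = (\<lambda>x. g x - R x)"
  have DI: "D \<in> I" using DJ J by (auto simp: D_def R_def)
  have WR: "\<forall>(t, \<zeta>)\<in>Ggrp m. (\<lambda>x. R (gact p q t \<zeta> x) - chi n d t \<zeta> * R x) \<in> I"
  proof (intro ballI, clarify)
    fix t \<zeta> assume tz: "(t, \<zeta>) \<in> Ggrp m"
    have "(\<lambda>x. D (gact p q t \<zeta> x)) \<in> I" using G tz DI unfolding Gst_def by blast
    then have X1: "(\<lambda>x. D (gact p q t \<zeta> x) - chi n d t \<zeta> * D x) \<in> I" by (rule id_diff[OF I _ id_smult[OF I DI]])
    have X2: "(\<lambda>x. g (gact p q t \<zeta> x) - chi n d t \<zeta> * g x) \<in> I" using Wg tz by blast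
    from X2 X1 have "(\<lambda>x. (g (gact p q t \<zeta> x) - chi n d t \<zeta> * g x) - (D (gact p q t \<zeta> x) - chi n d t \<zeta> * D x)) \<in> I"
      by (rule id_diff[OF I])
    then show "(\<lambda>x. R (gact p q t \<zeta> x) - chi n d t \<zeta> * R x) \<in> I"
      by (rule id_cong) (simp add: D_def algebra_simps)
  qed
  have wvs: "\<forall>\<alpha>\<in>S. (\<lambda>x. c \<alpha> * mono \<alpha> x) \<in> polyfun \<and> wv p q m (chi (wn p q \<alpha>) (wd \<alpha>)) (\<lambda>x. c \<alpha> * mono \<alpha> x)"
  proof
    fix \<alpha> assume "\<alpha> \<in> S"
    have "(\<lambda>x. c \<alpha> * mono \<alpha> x) \<in> polyfun" by (rule pf_smult[OF mono_pf])
    moreover have "wv p q m (chi (wn p q \<alpha>) (wd \<alpha>)) (\<lambda>x. c \<alpha> * mono \<alpha> x)"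
      unfolding wv_def
    proof (intro ballI allI, clarify)
      fix t \<zeta> x assume tz: "(t, \<zeta>) \<in> Ggrp m"
      show "c \<alpha> * mono \<alpha> (gact p q t \<zeta> x) = chi (wn p q \<alpha>) (wd \<alpha>) t \<zeta> * (c \<alpha> * mono \<alpha> x)"
        using mono_gact[of t \<zeta> \<alpha> p q x] Ggrp_nz[OF m0 tz] by simp
    qed
    ultimately show "(\<lambda>x. c \<alpha> * mono \<alpha> x) \<in> polyfun \<and> wv p q m (chi (wn p q \<alpha>) (wd \<alpha>)) (\<lambda>x. c \<alpha> * mono \<alpha> x)" ..
  qed
  have dist: "\<forall>\<alpha>\<in>S. \<forall>\<beta>\<in>S. \<alpha> \<noteq> \<beta> \<longrightarrow> (\<exists>(t, \<zeta>)\<in>Ggrp m. chi (wn p q \<alpha>) (wd \<alpha>) t \<zeta> \<noteq> chi (wn p q \<beta>) (wd \<beta>) t \<zeta>)"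
  proof (intro ballI impI)
    fix \<alpha> \<beta> assume "\<alpha> \<in> S" "\<beta> \<in> S" "\<alpha> \<noteq> \<beta>"
    then show "\<exists>(t, \<zeta>)\<in>Ggrp m. chi (wn p q \<alpha>) (wd \<alpha>) t \<zeta> \<noteq> chi (wn p q \<beta>) (wd \<beta>) t \<zeta>"
      using chi_distinct[of \<alpha> \<beta>] S(2) by simp
  qed
  have inI: "(\<lambda>x. c \<alpha> * mono \<alpha> x) \<in> I" if "\<alpha> \<in> S - {\<alpha>0}" for \<alpha>
  proof -
    have "std p q a \<alpha>" "\<alpha> \<noteq> \<alpha>0" using that S(2) by auto
    then have "\<exists>(t, \<zeta>)\<in>Ggrp m. chi (wn p q \<alpha>) (wd \<alpha>) t \<zeta> \<noteq> chi n d t \<zeta>"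
      using chi_distinct2[of \<alpha> \<alpha>0 n d] s0 by simp
    then obtain t \<zeta> where tz: "(t, \<zeta>) \<in> Ggrp m" "chi (wn p q \<alpha>) (wd \<alpha>) t \<zeta> \<noteq> chi n d t \<zeta>"
      by blast
    show ?thesis
    proof (rule sep2[of I p q m S "\<lambda>\<alpha> x. c \<alpha> * mono \<alpha> x" "\<lambda>\<alpha>. chi (wn p q \<alpha>) (wd \<alpha>)" R "chi n d" \<alpha> t \<zeta>])
      show "is_pf_ideal I" by (rule I)
      show "Gst p q m I" by (rule G)
      show "finite S" by (rule S(1))
      show "\<forall>k\<in>S. (\<lambda>x. c k * mono k x) \<in> polyfun \<and> wv p q m (chi (wn p q k) (wd k)) (\<lambda>x. c k * mono k x)" by (rule wvs)
      show "\<forall>k\<in>S. \<forall>k'\<in>S. k \<noteq> k' \<longrightarrow> (\<exists>(t, \<zeta>)\<in>Ggrp m. chi (wn p q k) (wd k) t \<zeta> \<noteq> chi (wn p q k') (wd k') t \<zeta>)" by (rule dist)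
      show "R = (\<lambda>x. \<Sum>k\<in>S. c k * mono k x)" by (rule R_def)
      show "\<forall>(t, \<zeta>)\<in>Ggrp m. (\<lambda>x. R (gact p q t \<zeta> x) - chi n d t \<zeta> * R x) \<in> I" by (rule WR)
      show "\<alpha> \<in> S" using that by blast
      show "(t, \<zeta>) \<in> Ggrp m" by (rule tz(1))
      show "chi (wn p q \<alpha>) (wd \<alpha>) t \<zeta> \<noteq> chi n d t \<zeta>" by (rule tz(2))
    qed
  qed
  define c' where "c' = (if \<alpha>0 \<in> S then c \<alpha>0 else 0)"
  have A: "(\<lambda>x. D x + (\<Sum>\<alpha>\<in>S - {\<alpha>0}. c \<alpha> * mono \<alpha> x)) \<in> I"
    by (rule id_add[OF I DI], rule id_sum[OF I]) (use S(1) inI in auto)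
  have eq: "D x + (\<Sum>\<alpha>\<in>S - {\<alpha>0}. c \<alpha> * mono \<alpha> x) = g x - c' * mono \<alpha>0 x" for x
  proof (cases "\<alpha>0 \<in> S")
    case True
    then show ?thesis unfolding D_def R_def c'_def using S(1) by (simp add: sum.remove)
  next
    case False
    then show ?thesis unfolding D_def R_def c'_def by simp
  qed
  have "(\<lambda>x. g x - c' * mono \<alpha>0 x) \<in> I" by (rule id_cong[OF A]) (rule eq)
  then show ?thesis by blast
qed

lemma Gst_J0: "Gst p q m (J0 p q a)"
  unfolding Gst_def using J0_gstable by blast

lemma J0_dim_one: "dim_one_mod (weight_space_mod p q m (J0 p q a) n d) (J0 p q a)"
proof -
  obtain \<alpha>0 where s0: "std p q a \<alpha>0" "wn p q \<alpha>0 = n" "int m dvd (wd \<alpha>0 - d)" using std_exists by blast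
  have inW: "mono \<alpha>0 \<in> weight_space_mod p q m (J0 p q a) n d"
    unfolding weight_space_mod_def
  proof (intro CollectI conjI mono_pf ballI, clarify)
    fix t \<zeta> assume tz: "(t, \<zeta>) \<in> Ggrp m"
    show "(\<lambda>x. mono \<alpha>0 (gact p q t \<zeta> x) - chi n d t \<zeta> * mono \<alpha>0 x) \<in> J0 p q a"
      by (rule id_cong[OF id_zero[OF J0_ideal]]) (simp add: mono_exact[OF s0(2,3) tz])
  qed
  show ?thesis unfolding dim_one_mod_def
    using inW std_notin_J0[OF s0(1)] NFW[OF J0_ideal Gst_J0 subset_refl _ s0] by blast
qed

lemma J0_in: "J0 p q a \<in> inv_hilb_points p q m \<and> B_stable (J0 p q a)"
proof -
  have H: "H_eq p q \<in> J0 p q a" unfolding J0_mem H_eq_def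
    by (rule exI[of _ "\<lambda>x. 1"], rule exI[of _ "\<lambda>x. x 3"], rule exI[of _ "\<lambda>x. - x 1"], rule exI[of _ "\<lambda>x. 0"])
      (intro conjI pf_const pf_coord pf_neg, simp_all add: fun_eq_iff algebra_simps)
  have G: "\<forall>(t, \<zeta>) \<in> Ggrp m. \<forall>f \<in> J0 p q a. (\<lambda>x. f (gact p q t \<zeta> x)) \<in> J0 p q a"
    using Gst_J0 unfolding Gst_def .
  have B: "\<forall>\<alpha> \<beta>. \<alpha> \<noteq> 0 \<longrightarrow> (\<forall>f\<in>J0 p q a. (\<lambda>x. f (bact \<alpha> \<beta> x)) \<in> J0 p q a)"
    using J0_bstable by blast
  show ?thesis unfolding inv_hilb_points_def B_stable_def
    using J0_ideal H G J0_dim_one B by simp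
qed


lemma mono_zero: "mono (\<lambda>_. 0) x = 1" by (simp add: monoK_def)

lemma uniq:
  assumes Ih: "I \<in> inv_hilb_points p q m" and Bs: "B_stable I"
  shows "I = J0 p q a"
proof -
  have I: "is_pf_ideal I" and H: "H_eq p q \<in> I" and G: "Gst p q m I"
    and D: "\<And>n d. dim_one_mod (weight_space_mod p q m I n d) I"
    using Ih unfolding inv_hilb_points_def Gst_def by auto
  have B: "\<And>\<alpha> \<beta> f. \<alpha> \<noteq> 0 \<Longrightarrow> f \<in> I \<Longrightarrow> (\<lambda>x. f (bact \<alpha> \<beta> x)) \<in> I"
    using Bs unfolding B_stable_def by blast
  have one: "(\<lambda>x. 1) \<notin> I"
  proof
    assume o: "(\<lambda>x. 1) \<in> I"
    obtain f where f: "f \<in> weight_space_mod p q m I 0 0" "f \<notin> I"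
      using D[of 0 0] unfolding dim_one_mod_def by blast
    have "f \<in> polyfun" using f(1) unfolding weight_space_mod_def by blast
    then have "f \<in> I" by (rule id_one[OF I o])
    then show False using f(2) by simp
  qed
  have const: "c = 0" if "(\<lambda>x. c) \<in> I" for c
  proof (rule ccontr)
    assume "c \<noteq> 0"
    have "(\<lambda>x. inverse c * c) \<in> I" using id_smult[OF I that] .
    then have "(\<lambda>x. 1) \<in> I" using \<open>c \<noteq> 0\<close> by simp
    then show False using one by simp
  qed
  have exW: "mono \<beta> \<in> weight_space_mod p q m I n d" if "wn p q \<beta> = n" "int m dvd (wd \<beta> - d)" for \<beta> n d
    unfolding weight_space_mod_def
  proof (intro CollectI conjI mono_pf ballI, clarify)
    fix t \<zeta> assume tz: "(t, \<zeta>) \<in> Ggrp m"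
    show "(\<lambda>x. mono \<beta> (gact p q t \<zeta> x) - chi n d t \<zeta> * mono \<beta> x) \<in> I"
      by (rule id_cong[OF id_zero[OF I]]) (simp add: mono_exact[OF that tz])
  qed
  have lin2: "\<exists>c1 c2. (c1 \<noteq> 0 \<or> c2 \<noteq> 0) \<and> (\<lambda>x. c1 * mono \<alpha> x + c2 * mono \<beta> x) \<in> I"
    if "wn p q \<beta> = wn p q \<alpha>" "int m dvd (wd \<beta> - wd \<alpha>)" for \<alpha> \<beta>
  proof -
    have ua: "mono \<alpha> \<in> weight_space_mod p q m I (wn p q \<alpha>) (wd \<alpha>)" by (rule exW) simp_all
    have ub: "mono \<beta> \<in> weight_space_mod p q m I (wn p q \<alpha>) (wd \<alpha>)" by (rule exW[OF that])
    obtain f0 where f0: "f0 \<notin> I" "\<forall>g\<in>weight_space_mod p q m I (wn p q \<alpha>) (wd \<alpha>). \<exists>c. (\<lambda>x. g x - c * f0 x) \<in> I"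
      using D unfolding dim_one_mod_def by blast
    obtain ca where ca: "(\<lambda>x. mono \<alpha> x - ca * f0 x) \<in> I" using f0(2) ua by blast
    obtain cb where cb: "(\<lambda>x. mono \<beta> x - cb * f0 x) \<in> I" using f0(2) ub by blast
    show ?thesis
    proof (cases "ca = 0")
      case True
      have X: "(\<lambda>x. 1 * mono \<alpha> x + 0 * mono \<beta> x) \<in> I" by (rule id_cong[OF ca]) (simp add: True)
      show ?thesis by (rule exI[of _ 1], rule exI[of _ 0], rule conjI) (simp, rule X)
    next
      case False
      have "(\<lambda>x. cb * (mono \<alpha> x - ca * f0 x) - ca * (mono \<beta> x - cb * f0 x)) \<in> I"
        by (rule id_diff[OF I id_smult[OF I ca] id_smult[OF I cb]])
      then have "(\<lambda>x. cb * mono \<alpha> x + (- ca) * mono \<beta> x) \<in> I"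
        by (rule id_cong) (simp add: algebra_simps)
      then show ?thesis using False by (intro exI[of _ cb] exI[of _ "- ca"] conjI) simp_all
    qed
  qed
  have xj: "(\<lambda>x. x j) \<in> I" if c12: "c1 \<noteq> 0 \<or> c2 \<noteq> 0" and inI: "(\<lambda>x. c1 * x i + c2 * x j) \<in> I"
    and bi: "\<And>x. bact 1 1 x i = x i + x j" and bj: "\<And>x. bact 1 1 x j = x j" for i j c1 c2
  proof -
    have "(\<lambda>x. c1 * bact 1 1 x i + c2 * bact 1 1 x j) \<in> I" using B[OF _ inI, of 1 1] by simp
    then have "(\<lambda>x. (c1 * bact 1 1 x i + c2 * bact 1 1 x j) - (c1 * x i + c2 * x j)) \<in> I"
      by (rule id_diff[OF I _ inI])
    then have c1j: "(\<lambda>x. c1 * x j) \<in> I" by (rule id_cong) (simp add: bi bj algebra_simps)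
    show ?thesis
    proof (cases "c1 = 0")
      case False
      have "(\<lambda>x. inverse c1 * (c1 * x j)) \<in> I" by (rule id_smult[OF I c1j])
      then show ?thesis by (rule id_cong) (simp add: False)
    next
      case True
      then have "c2 \<noteq> 0" using c12 by simp
      have "(\<lambda>x. inverse c2 * (c1 * x i + c2 * x j)) \<in> I" by (rule id_smult[OF I inI])
      then show ?thesis by (rule id_cong) (simp add: True \<open>c2 \<noteq> 0\<close>)
    qed
  qed
  have wdl: "wn p q (dl 1) = - int p" "wd (dl 1) = -1" "wn p q (dl 2) = - int p" "wd (dl 2) = -1"
    "wn p q (dl 3) = int q" "wd (dl 3) = 1" "wn p q (dl 4) = int q" "wd (dl 4) = 1"
    by (simp_all add: wn_def wd_def dl_def)
  have x2: "(\<lambda>x. x 2) \<in> I"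
  proof -
    obtain c1 c2 where c: "c1 \<noteq> 0 \<or> c2 \<noteq> 0" "(\<lambda>x. c1 * mono (dl 1) x + c2 * mono (dl 2) x) \<in> I"
      using lin2[of "dl 2" "dl 1"] wdl by auto
    have "(\<lambda>x. c1 * x 1 + c2 * x 2) \<in> I" by (rule id_cong[OF c(2)]) (simp add: mono_dl)
    then show ?thesis by (rule xj[OF c(1)]) (simp_all add: bact_simps)
  qed
  have x4: "(\<lambda>x. x 4) \<in> I"
  proof -
    obtain c1 c2 where c: "c1 \<noteq> 0 \<or> c2 \<noteq> 0" "(\<lambda>x. c1 * mono (dl 3) x + c2 * mono (dl 4) x) \<in> I"
      using lin2[of "dl 4" "dl 3"] wdl by auto
    have "(\<lambda>x. c1 * x 3 + c2 * x 4) \<in> I" by (rule id_cong[OF c(2)]) (simp add: mono_dl)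
    then show ?thesis by (rule xj[OF c(1)]) (simp_all add: bact_simps)
  qed
  have x0: "(\<lambda>x. x 0 ^ (q - p)) \<in> I"
  proof -
    have a1: "(\<lambda>x. x 1 * x 4) \<in> I" by (rule id_mult[OF I pf_coord x4]) simp
    have a2: "(\<lambda>x. x 3 * x 2) \<in> I" by (rule id_mult[OF I pf_coord x2]) simp
    have "(\<lambda>x. H_eq p q x + (x 1 * x 4 - x 3 * x 2)) \<in> I"
      by (rule id_add[OF I H id_diff[OF I a1 a2]])
    then show ?thesis by (rule id_cong) (simp add: H_eq_def algebra_simps)
  qed
  have MI: "M p q a \<in> I"
  proof -
    have w0: "wn p q (\<lambda>_. 0) = 0" "wd (\<lambda>_. 0) = 0" by (simp_all add: wn_def wd_def)
    have wM: "wn p q (vM p q a) = 0" "wd (vM p q a) = - int m" by (simp_all add: wn_def wd_def vM_def intm)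
    obtain c1 c2 where c: "c1 \<noteq> 0 \<or> c2 \<noteq> 0" "(\<lambda>x. c1 * mono (\<lambda>_. 0) x + c2 * mono (vM p q a) x) \<in> I"
      using lin2[of "vM p q a" "\<lambda>_. 0"] w0 wM by auto
    have c': "(\<lambda>x. c1 + c2 * M p q a x) \<in> I" by (rule id_cong[OF c(2)]) (simp add: mono_vM mono_zero)
    have c2: "c2 \<noteq> 0"
    proof
      assume "c2 = 0"
      then have "(\<lambda>x. c1) \<in> I" using c' by simp
      then have "c1 = 0" by (rule const)
      then show False using c(1) \<open>c2 = 0\<close> by simp
    qed
    define e where "e = c1 / c2"
    have K: "(\<lambda>x. M p q a x + e) \<in> I"
      using id_smult[OF I c', of "inverse c2"] by (rule id_cong) (simp add: e_def c2 field_simps)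
    define N where "N = a * q + a * p"
    have MB: "M p q a (bact 2 0 x) = 2 ^ N * M p q a x" for x
      by (simp add: M_def bact_simps N_def power_mult_distrib power_add)
    have "(\<lambda>x. M p q a (bact 2 0 x) + e) \<in> I" using B[OF _ K, of 2 0] by simp
    then have "(\<lambda>x. (M p q a (bact 2 0 x) + e) - 2 ^ N * (M p q a x + e)) \<in> I"
      by (rule id_diff[OF I _ id_smult[OF I K]])
    then have "(\<lambda>x. e * (1 - 2 ^ N)) \<in> I" by (rule id_cong) (simp add: MB algebra_simps)
    then have "e * (1 - 2 ^ N) = 0" by (rule const)
    moreover have "(2::complex) ^ N \<noteq> 1"
    proof -
      have "0 < N" using a0 pq by (simp add: N_def)
      then have "(1::nat) < 2 ^ N" using one_less_power[of "2::nat" N] by simp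
      then have "(of_nat (2 ^ N) :: complex) \<noteq> of_nat 1" by (metis nat_neq_iff of_nat_eq_iff)
      then show ?thesis by simp
    qed
    ultimately have "e = 0" by simp
    then show ?thesis using K by simp
  qed
  have sub1: "J0 p q a \<subseteq> I"
  proof
    fix f assume "f \<in> J0 p q a"
    then obtain h0 h1 h2 h3 where
     hh: "h0 \<in> polyfun" "h1 \<in> polyfun" "h2 \<in> polyfun" "h3 \<in> polyfun"
     "f = (\<lambda>x. h0 x * x 0 ^ (q - p) + h1 x * x 2 + h2 x * x 4 + h3 x * M p q a x)"
      unfolding J0_mem by blast
    have t0: "(\<lambda>x. h0 x * x 0 ^ (q - p)) \<in> I" by (rule id_mult[OF I hh(1) x0])
    have t1: "(\<lambda>x. h1 x * x 2) \<in> I" by (rule id_mult[OF I hh(2) x2])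
    have t2: "(\<lambda>x. h2 x * x 4) \<in> I" by (rule id_mult[OF I hh(3) x4])
    have t3: "(\<lambda>x. h3 x * M p q a x) \<in> I" by (rule id_mult[OF I hh(4) MI])
    show "f \<in> I" unfolding hh(5)
      by (rule id_add[OF I id_add[OF I id_add[OF I t0 t1] t2] t3])
  qed
  have sub2: "I \<subseteq> J0 p q a"
  proof
    fix f assume fI: "f \<in> I"
    have fp: "f \<in> polyfun" using id_sub[OF I fI] .
    have "\<exists>S c. finite S \<and> (\<forall>\<alpha>\<in>S. std p q a \<alpha>) \<and> (\<lambda>x. f x - (\<Sum>\<alpha>\<in>S. c \<alpha> * mono \<alpha> x)) \<in> J0 p q a"
      by (rule normal_form[OF fp])
    then obtain S c where S: "finite S" "\<forall>\<alpha>\<in>S. std p q a \<alpha>" and DJ: "(\<lambda>x. f x - (\<Sum>\<alpha>\<in>S. c \<alpha> * mono \<alpha> x)) \<in> J0 p q a"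
      by (elim exE conjE)
    have "(\<lambda>x. f x - (f x - (\<Sum>\<alpha>\<in>S. c \<alpha> * mono \<alpha> x))) \<in> I"
      by (rule id_diff[OF I fI]) (use DJ sub1 in blast)
    then have RI: "(\<lambda>x. \<Sum>\<alpha>\<in>S. c \<alpha> * mono \<alpha> x) \<in> I" by (rule id_cong) simp
    have wvs: "\<forall>\<alpha>\<in>S. (\<lambda>x. c \<alpha> * mono \<alpha> x) \<in> polyfun \<and> wv p q m (chi (wn p q \<alpha>) (wd \<alpha>)) (\<lambda>x. c \<alpha> * mono \<alpha> x)"
    proof
      fix \<alpha> assume "\<alpha> \<in> S"
      have "(\<lambda>x. c \<alpha> * mono \<alpha> x) \<in> polyfun" by (rule pf_smult[OF mono_pf])
      moreover have "wv p q m (chi (wn p q \<alpha>) (wd \<alpha>)) (\<lambda>x. c \<alpha> * mono \<alpha> x)"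
        unfolding wv_def
      proof (intro ballI allI, clarify)
        fix t \<zeta> x assume tz: "(t, \<zeta>) \<in> Ggrp m"
        show "c \<alpha> * mono \<alpha> (gact p q t \<zeta> x) = chi (wn p q \<alpha>) (wd \<alpha>) t \<zeta> * (c \<alpha> * mono \<alpha> x)"
          using mono_gact[of t \<zeta> \<alpha> p q x] Ggrp_nz[OF m0 tz] by simp
      qed
      ultimately show "(\<lambda>x. c \<alpha> * mono \<alpha> x) \<in> polyfun \<and> wv p q m (chi (wn p q \<alpha>) (wd \<alpha>)) (\<lambda>x. c \<alpha> * mono \<alpha> x)" ..
    qed
    have dist: "\<forall>\<alpha>\<in>S. \<forall>\<beta>\<in>S. \<alpha> \<noteq> \<beta> \<longrightarrow> (\<exists>(t, \<zeta>)\<in>Ggrp m. chi (wn p q \<alpha>) (wd \<alpha>) t \<zeta> \<noteq> chi (wn p q \<beta>) (wd \<beta>) t \<zeta>)"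
    proof (intro ballI impI)
      fix \<alpha> \<beta> assume "\<alpha> \<in> S" "\<beta> \<in> S" "\<alpha> \<noteq> \<beta>"
      then show "\<exists>(t, \<zeta>)\<in>Ggrp m. chi (wn p q \<alpha>) (wd \<alpha>) t \<zeta> \<noteq> chi (wn p q \<beta>) (wd \<beta>) t \<zeta>"
        using chi_distinct[of \<alpha> \<beta>] S(2) by simp
    qed
    have each: "\<forall>\<alpha>\<in>S. (\<lambda>x. c \<alpha> * mono \<alpha> x) \<in> I"
      by (rule sep[of I p q m S "\<lambda>\<alpha> x. c \<alpha> * mono \<alpha> x" "\<lambda>\<alpha>. chi (wn p q \<alpha>) (wd \<alpha>)", OF I G S(1) wvs dist RI])
    have c0: "c \<alpha> = 0" if aS: "\<alpha> \<in> S" for \<alpha>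
    proof (rule ccontr)
      assume nz: "c \<alpha> \<noteq> 0"
      have "(\<lambda>x. inverse (c \<alpha>) * (c \<alpha> * mono \<alpha> x)) \<in> I" using id_smult[OF I] each aS by blast
      then have mI: "mono \<alpha> \<in> I" by (rule id_cong) (simp add: nz)
      obtain f1 where f1: "f1 \<in> weight_space_mod p q m I (wn p q \<alpha>) (wd \<alpha>)" "f1 \<notin> I"
        using D unfolding dim_one_mod_def by blast
      obtain c' where "(\<lambda>x. f1 x - c' * mono \<alpha> x) \<in> I"
        using NFW[OF I G sub1 f1(1), of \<alpha>] S(2) aS by auto
      then have "(\<lambda>x. (f1 x - c' * mono \<alpha> x) + c' * mono \<alpha> x) \<in> I"
        by (rule id_add[OF I _ id_smult[OF I mI]])
      then have "f1 \<in> I" by (rule id_cong) simp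
      then show False using f1(2) by simp
    qed
    show "f \<in> J0 p q a" by (rule id_cong[OF DJ]) (simp add: c0)
  qed
  show ?thesis using sub1 sub2 by blast
qed

end

theorem proposition5p1:
  fixes p q m a :: nat
  assumes "0 < p" and "p \<le> q" and "coprime p q" and "0 < m"
    and "m = a * (q - p)"
  shows "{I \<in> inv_hilb_points p q m. B_stable I} = {J0 p q a}"
proof -
  have "0 < a" "0 < q - p" using assms(4,5) by (simp_all add: gr0I)
  then have pq: "p < q" by simp
  interpret L p q m a
    by unfold_locales (use assms pq \<open>0 < a\<close> in auto)
  show ?thesis using J0_in uniq by blast
qed

end
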